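(* Let $\alpha,\beta$ be reals with $2>\alpha>\beta\geq1$ and let $\ell_0=\ell_0(\alpha,\beta)$. Let $\mathcal{F}$ be a family of bipartite graphs such that there are constants $\rho>0$ and $C$ with $z(m,n,\mathcal{F})\leq \rho m n^{\alpha-1}+Cn^{\beta}$ for all positive integers $m\leq n$. For every real $\delta>0$ there is a real $\mu'>0$ depending only on $\alpha,\beta,\rho,\delta$ such that for all sufficiently large $n$ the following holds. Let $G$ be an $\mathcal{F}$-free bipartite graph with at most $n$ vertices and minimum degree at least $\delta n^{\alpha-1}$, and let $u\in V(G)$. Then there exist a set $S\subseteq V(G)$ with $|S|\geq \mu' n$ and a family $\mathcal{P}=\{P_v: v\in S\}$, where each $P_v$ is a path from $u$ to $v$ of length at most $\ell_0$, such that no vertex other than $u$ lies on more than $n/\log n$ of the paths in $\mathcal{P}$.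
   Context: $z(m,n,\mathcal{F})$ is the maximum number of edges in an $\mathcal{F}$-free bipartite graph with parts of sizes $m$ and $n$ ($\mathcal{F}$-free: containing no member of $\mathcal{F}$ as a subgraph). For reals $2>\alpha>\beta\geq1$, define $\ell_0(\alpha,\beta)=\left\lfloor \log_{\beta}\frac{(2-\beta)(\alpha-1)}{\alpha-\beta}\right\rfloor+2$ if $\beta>1$, and $\ell_0(\alpha,\beta)=\lfloor 1/(\alpha-1)\rfloor+1$ if $\beta=1$. *)

theory Defs
  imports Complex_Main
begin

definition graph :: "'a set \<Rightarrow> 'a set set \<Rightarrow> bool" where
  "graph V E \<longleftrightarrow> (\<forall>e\<in>E. \<exists>x y. x \<noteq> y \<and> x \<in> V \<and> y \<in> V \<and> e = {x, y})"

definition bipartite :: "'a set \<Rightarrow> 'a set set \<Rightarrow> bool" where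
  "bipartite V E \<longleftrightarrow> graph V E \<and>
     (\<exists>A B. A \<inter> B = {} \<and> A \<union> B = V \<and> (\<forall>e\<in>E. \<exists>a\<in>A. \<exists>b\<in>B. e = {a, b}))"

definition contains_subgraph :: "'a set \<Rightarrow> 'a set set \<Rightarrow> ('b set \<times> 'b set set) \<Rightarrow> bool" where
  "contains_subgraph V E H \<longleftrightarrow>
     (\<exists>f. inj_on f (fst H) \<and> f ` (fst H) \<subseteq> V \<and> (\<forall>e\<in>snd H. f ` e \<in> E))"

definition F_free :: "('b set \<times> 'b set set) set \<Rightarrow> 'a set \<Rightarrow> 'a set set \<Rightarrow> bool" where
  "F_free F V E \<longleftrightarrow> \<not> (\<exists>H\<in>F. contains_subgraph V E H)"

definition zar :: "nat \<Rightarrow> nat \<Rightarrow> ('b set \<times> 'b set set) set \<Rightarrow> nat" where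
  "zar m n F = Max {card E | A B (E :: nat set set).
      finite A \<and> finite B \<and> A \<inter> B = {} \<and> card A = m \<and> card B = n \<and>
      E \<subseteq> {{a, b} | a b. a \<in> A \<and> b \<in> B} \<and> F_free F (A \<union> B) E}"

definition degree :: "'a set \<Rightarrow> 'a set set \<Rightarrow> 'a \<Rightarrow> nat" where
  "degree V E x = card {y \<in> V. {x, y} \<in> E}"

text \<open>A path from u to v: a nonempty list of distinct vertices, consecutive ones adjacent;
  its length (number of edges) is length p - 1.\<close>
definition is_path :: "'a set \<Rightarrow> 'a set set \<Rightarrow> 'a \<Rightarrow> 'a \<Rightarrow> 'a list \<Rightarrow> bool" where
  "is_path V E u v p \<longleftrightarrow> p \<noteq> [] \<and> hd p = u \<and> last p = v \<and> distinct p \<and> set p \<subseteq> V \<and>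
     (\<forall>i. Suc i < length p \<longrightarrow> {p ! i, p ! Suc i} \<in> E)"

definition ell0 :: "real \<Rightarrow> real \<Rightarrow> nat" where
  "ell0 \<alpha> \<beta> = (if \<beta> > 1
     then nat (\<lfloor>log \<beta> ((2 - \<beta>) * (\<alpha> - 1) / (\<alpha> - \<beta>))\<rfloor> + 2)
     else nat (\<lfloor>1 / (\<alpha> - 1)\<rfloor> + 1))"

end

theory Submission
  imports Defs
begin


fun ex :: "real \<Rightarrow> real \<Rightarrow> nat \<Rightarrow> real" where
  "ex \<alpha> \<beta> 0 = \<alpha> - 1"
| "ex \<alpha> \<beta> (Suc k) = (ex \<alpha> \<beta> k + \<alpha> - 1) / \<beta>"

lemma ex_beta1: "ex \<alpha> 1 k = real (Suc k) * (\<alpha> - 1)"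
  by (induction k) (auto simp: algebra_simps)

lemma ex_closed:
  assumes "\<beta> > 1"
  shows "ex \<alpha> \<beta> k = (\<alpha>-1)/(\<beta>-1) - ((\<alpha>-1)/(\<beta>-1) - (\<alpha>-1)) / \<beta>^k"
proof (induction k)
  case 0 then show ?case by simp
next
  case (Suc k)
  define E where "E = (\<alpha>-1)/(\<beta>-1)"
  have b: "\<beta> - 1 \<noteq> 0" "\<beta> \<noteq> 0" using assms by auto
  have EE: "E + \<alpha> - 1 = \<beta> * E" using b unfolding E_def by (simp add: field_simps)
  have "ex \<alpha> \<beta> (Suc k) = (E - (E - (\<alpha>-1)) / \<beta>^k + \<alpha> - 1) / \<beta>"
    using Suc unfolding E_def by simp
  also have "\<dots> = (\<beta> * E - (E - (\<alpha>-1)) / \<beta>^k) / \<beta>" using EE by (simp add: algebra_simps)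
  also have "\<dots> = E - (E - (\<alpha>-1)) / \<beta>^(Suc k)" using b by (simp add: field_simps)
  finally show ?case unfolding E_def .
qed

lemma ell0_ge2:
  assumes "\<alpha> < 2" "\<beta> < \<alpha>" "1 \<le> \<beta>"
  shows "ell0 \<alpha> \<beta> \<ge> 2"
proof (cases "\<beta> > 1")
  case True
  have "(2 - \<beta>) * (\<alpha> - 1) / (\<alpha> - \<beta>) \<ge> 1"
  proof -
    have "(2 - \<beta>) * (\<alpha> - 1) - (\<alpha> - \<beta>) = (2 - \<alpha>) * (\<beta> - 1)" by (simp add: algebra_simps)
    also have "\<dots> \<ge> 0" using assms by auto
    finally show ?thesis using assms by (simp add: field_simps)
  qed
  then have "log \<beta> ((2 - \<beta>) * (\<alpha> - 1) / (\<alpha> - \<beta>)) \<ge> 0" using True by simp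
  then have "\<lfloor>log \<beta> ((2 - \<beta>) * (\<alpha> - 1) / (\<alpha> - \<beta>))\<rfloor> \<ge> 0" by simp
  then have "nat (\<lfloor>log \<beta> ((2 - \<beta>) * (\<alpha> - 1) / (\<alpha> - \<beta>))\<rfloor> + 2) \<ge> 2"
    by (simp add: le_nat_iff)
  then show ?thesis using True unfolding ell0_def by simp
next
  case False
  then have "\<beta> = 1" using assms by auto
  have "1 / (\<alpha> - 1) \<ge> 1" using assms by (simp add: field_simps)
  then have "\<lfloor>1 / (\<alpha> - 1)\<rfloor> \<ge> 1" by linarith
  moreover have "\<And>z::int. z \<ge> 1 \<Longrightarrow> nat (z + 1) \<ge> 2" by linarith
  ultimately have "nat (\<lfloor>1 / (\<alpha> - 1)\<rfloor> + 1) \<ge> 2" by blast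
  then show ?thesis using False unfolding ell0_def by simp
qed

lemma ex_ell0:
  assumes "\<alpha> < 2" "\<beta> < \<alpha>" "1 \<le> \<beta>"
  shows "ex \<alpha> \<beta> (ell0 \<alpha> \<beta> - 1) > 1"
proof (cases "\<beta> > 1")
  case True
  define x where "x = (2 - \<beta>) * (\<alpha> - 1) / (\<alpha> - \<beta>)"
  have x1: "x \<ge> 1"
  proof -
    have "(2 - \<beta>) * (\<alpha> - 1) - (\<alpha> - \<beta>) = (2 - \<alpha>) * (\<beta> - 1)" by (simp add: algebra_simps)
    also have "\<dots> \<ge> 0" using assms by auto
    finally show ?thesis using assms by (simp add: field_simps x_def)
  qed
  have lg: "log \<beta> x \<ge> 0" using True x1 by simp
  have L: "ell0 \<alpha> \<beta> - 1 = nat (\<lfloor>log \<beta> x\<rfloor> + 1)"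
    using True lg unfolding ell0_def x_def by simp
  define k where "k = ell0 \<alpha> \<beta> - 1"
  have kr: "real k > log \<beta> x" using L lg unfolding k_def by linarith
  have "\<beta> ^ k = \<beta> powr real k" using True by (simp add: powr_realpow)
  also have "\<dots> > \<beta> powr (log \<beta> x)" using kr True by (intro powr_less_mono) auto
  also have "\<beta> powr (log \<beta> x) = x" using True x1 by simp
  finally have bk: "\<beta> ^ k > x" .
  have bkpos: "\<beta> ^ k > 0" using True by simp
  have d: "(\<alpha>-1)/(\<beta>-1) - (\<alpha>-1) = x * ((\<alpha>-1)/(\<beta>-1) - 1)"
  proof -
    have h: "\<alpha> - \<beta> \<noteq> 0" "\<beta> - 1 \<noteq> 0" using True assms by auto
    have "(\<alpha>-1)/(\<beta>-1) - (\<alpha>-1) = (2 - \<beta>) * (\<alpha> - 1) / (\<beta> - 1)"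
      using h by (simp add: field_simps)
    also have "\<dots> = x * ((\<alpha>-\<beta>)/(\<beta>-1))"
    proof -
      have "x * (\<alpha>-\<beta>) = (2-\<beta>)*(\<alpha>-1)" unfolding x_def using h(1) by simp
      then show ?thesis by (metis times_divide_eq_right)
    qed
    also have "(\<alpha>-\<beta>)/(\<beta>-1) = (\<alpha>-1)/(\<beta>-1) - 1" using h by (simp add: field_simps)
    finally show ?thesis .
  qed
  have e1: "(\<alpha>-1)/(\<beta>-1) - 1 > 0" using True assms by (simp add: field_simps)
  have "((\<alpha>-1)/(\<beta>-1) - (\<alpha>-1)) / \<beta>^k < (\<alpha>-1)/(\<beta>-1) - 1"
  proof -
    have "((\<alpha>-1)/(\<beta>-1) - (\<alpha>-1)) = x * ((\<alpha>-1)/(\<beta>-1) - 1)" by (rule d)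
    also have "\<dots> < \<beta>^k * ((\<alpha>-1)/(\<beta>-1) - 1)" using bk e1 by simp
    finally show ?thesis using bkpos by (simp add: divide_less_eq mult.commute)
  qed
  then show ?thesis using ex_closed[OF True, of \<alpha> k] unfolding k_def by linarith
next
  case False
  then have b1: "\<beta> = 1" using assms by auto
  have L: "ell0 \<alpha> \<beta> - 1 = nat \<lfloor>1 / (\<alpha> - 1)\<rfloor>" using False unfolding ell0_def by simp
  have "1 / (\<alpha> - 1) \<ge> 1" using assms b1 by (simp add: field_simps)
  then have "\<lfloor>1 / (\<alpha> - 1)\<rfloor> \<ge> 0" by linarith
  then have "real (nat \<lfloor>1 / (\<alpha> - 1)\<rfloor>) = real_of_int \<lfloor>1 / (\<alpha> - 1)\<rfloor>" by simp
  moreover have "real_of_int \<lfloor>1 / (\<alpha> - 1)\<rfloor> + 1 > 1 / (\<alpha> - 1)" by linarith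
  ultimately have f: "real (nat \<lfloor>1 / (\<alpha> - 1)\<rfloor>) + 1 > 1 / (\<alpha> - 1)" by linarith
  have a1: "\<alpha> - 1 > 0" using assms b1 by simp
  have "real (Suc (nat \<lfloor>1 / (\<alpha> - 1)\<rfloor>)) * (\<alpha> - 1) > 1 / (\<alpha> - 1) * (\<alpha> - 1)"
  proof -
    have f': "real (Suc (nat \<lfloor>1 / (\<alpha> - 1)\<rfloor>)) > 1 / (\<alpha> - 1)" using f by (simp only: of_nat_Suc add.commute)
    show ?thesis using mult_strict_right_mono[OF f' a1] .
  qed
  moreover have "1 / (\<alpha> - 1) * (\<alpha> - 1) = 1" using a1 by simp
  moreover have "ex \<alpha> \<beta> (ell0 \<alpha> \<beta> - 1) = real (Suc (nat \<lfloor>1 / (\<alpha> - 1)\<rfloor>)) * (\<alpha> - 1)"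
    using ex_beta1[of \<alpha> "nat \<lfloor>1 / (\<alpha> - 1)\<rfloor>"] unfolding L b1[symmetric] by simp
  ultimately show ?thesis by linarith
qed


lemma lin_case:
  fixes y m \<rho> \<alpha> \<delta> :: real
  assumes "0 < y" "0 \<le> m" "\<rho> > 0" "1 < \<alpha>" "\<delta> > 0"
    and "y powr (\<alpha>-1) \<ge> \<delta> * m powr (\<alpha>-1) / (2*\<rho>)"
  shows "(\<delta>/(2*\<rho>)) powr (1/(\<alpha>-1)) * m \<le> y"
proof (rule ccontr)
  assume "\<not> ?thesis"
  then have lt: "y < (\<delta>/(2*\<rho>)) powr (1/(\<alpha>-1)) * m" by simp
  have "((\<delta>/(2*\<rho>)) powr (1/(\<alpha>-1)) * m) powr (\<alpha>-1) = ((\<delta>/(2*\<rho>)) powr (1/(\<alpha>-1))) powr (\<alpha>-1) * m powr (\<alpha>-1)"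
    using assms by (simp add: powr_mult)
  also have "((\<delta>/(2*\<rho>)) powr (1/(\<alpha>-1))) powr (\<alpha>-1) = \<delta>/(2*\<rho>)"
    using assms by (simp add: powr_powr)
  finally have eq: "((\<delta>/(2*\<rho>)) powr (1/(\<alpha>-1)) * m) powr (\<alpha>-1) = \<delta> * m powr (\<alpha>-1) / (2*\<rho>)" by simp
  have "y powr (\<alpha>-1) < ((\<delta>/(2*\<rho>)) powr (1/(\<alpha>-1)) * m) powr (\<alpha>-1)"
    using lt assms by (intro powr_less_mono2) auto
  then show False using eq assms(6) by simp
qed

lemma exp_num:
  fixes p y m Dv C \<rho> \<alpha> \<beta> \<delta> :: real
  assumes p1: "1 \<le> p" "p \<le> m" and y0: "0 < y" and rho: "\<rho> > 0" and C1: "C > 0"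
    and a: "1 < \<alpha>" "\<alpha> < 2" and b: "1 \<le> \<beta>" and d: "\<delta> > 0"
    and Dv: "Dv = \<delta> * m powr (\<alpha>-1)" and small: "2*C*m powr (\<beta>-1) < Dv"
    and h1: "p \<le> y \<Longrightarrow> p*Dv \<le> \<rho>*p*y powr (\<alpha>-1) + C*y powr \<beta>"
    and h2: "y < p \<Longrightarrow> p*Dv \<le> \<rho>*y*p powr (\<alpha>-1) + C*p powr \<beta>"
  shows "min ((\<delta>/(2*\<rho>)) powr (1/(\<alpha>-1)) * m) ((p*Dv/(2*C)) powr (1/\<beta>)) \<le> y"
proof -
  have m0: "0 \<le> m" using p1 by simp
  have Dvpos: "Dv > 0" using small C1 by (smt (verit) mult_nonneg_nonneg powr_ge_zero)
  show ?thesis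
  proof (cases "p \<le> y")
    case True
    note h = h1[OF True]
    show ?thesis
    proof (cases "\<rho>*p*y powr (\<alpha>-1) \<ge> p*Dv/2")
      case True
      then have "p*(\<rho> * y powr (\<alpha>-1)) \<ge> p*(Dv/2)" by (simp add: mult_ac)
      then have "\<rho> * y powr (\<alpha>-1) \<ge> Dv/2" using p1 mult_le_cancel_left_pos[of p] by simp
      then have "y powr (\<alpha>-1) \<ge> \<delta> * m powr (\<alpha>-1) / (2*\<rho>)" using rho Dv by (simp add: field_simps)
      then have "(\<delta>/(2*\<rho>)) powr (1/(\<alpha>-1)) * m \<le> y" using lin_case y0 m0 rho a d by blast
      then show ?thesis by simp
    next
      case False
      then have "C * y powr \<beta> \<ge> p*Dv/2" using h by linarith
      then have yb: "y powr \<beta> \<ge> p*Dv/(2*C)" using C1 by (simp add: field_simps)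
      have "(p*Dv/(2*C)) powr (1/\<beta>) \<le> (y powr \<beta>) powr (1/\<beta>)"
        using yb p1 Dvpos C1 b by (intro powr_mono2) auto
      also have "\<dots> = y" using y0 b by (simp add: powr_powr)
      finally show ?thesis by simp
    qed
  next
    case False
    then have yp: "y < p" by simp
    note h = h2[OF yp]
    have "p powr (\<beta>-1) \<le> m powr (\<beta>-1)" using p1 b by (intro powr_mono2) auto
    moreover have "p powr \<beta> = p * p powr (\<beta>-1)" using p1 by (simp add: powr_diff)
    ultimately have "C * p powr \<beta> \<le> p * (C * m powr (\<beta>-1))" using C1 p1
      by (simp add: mult_left_mono mult.left_commute)
    also have "\<dots> < p * (Dv/2)" using small p1 by (intro mult_strict_left_mono) auto
    finally have "\<rho>*y*p powr (\<alpha>-1) > p*Dv/2" using h by linarith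
    moreover have "p = p powr (\<alpha>-1) * p powr (2-\<alpha>)" using p1 by (simp add: powr_add[symmetric])
    ultimately have "\<rho>*y*p powr (\<alpha>-1) > p powr (\<alpha>-1) * p powr (2-\<alpha>) * Dv/2" by simp
    moreover have "p powr (\<alpha>-1) > 0" using p1 by simp
    ultimately have "\<rho>*y > p powr (2-\<alpha>) * Dv/2"
      by (smt (verit) mult.commute mult.left_commute mult_less_cancel_left_pos times_divide_eq_right)
    moreover have "y powr (2-\<alpha>) \<le> p powr (2-\<alpha>)" using yp y0 a by (intro powr_mono2) auto
    ultimately have "\<rho>*y > y powr (2-\<alpha>) * Dv/2" using Dvpos
      by (smt (verit) divide_right_mono mult_right_mono)
    moreover have "y = y powr (\<alpha>-1) * y powr (2-\<alpha>)" using y0 by (simp add: powr_add[symmetric])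
    ultimately have "\<rho> * y powr (\<alpha>-1) * y powr (2-\<alpha>) > y powr (2-\<alpha>) * (Dv/2)" by (simp add: mult.assoc)
    moreover have "y powr (2-\<alpha>) > 0" using y0 by simp
    ultimately have "\<rho> * y powr (\<alpha>-1) > Dv/2"
      by (smt (verit) mult.commute mult_less_cancel_left_pos)
    then have "y powr (\<alpha>-1) \<ge> \<delta> * m powr (\<alpha>-1) / (2*\<rho>)" using rho Dv by (simp add: field_simps)
    then have "(\<delta>/(2*\<rho>)) powr (1/(\<alpha>-1)) * m \<le> y" using lin_case y0 m0 rho a d by blast
    then show ?thesis by simp
  qed
qed


fun tt :: "real \<Rightarrow> real \<Rightarrow> real \<Rightarrow> real \<Rightarrow> nat \<Rightarrow> nat" where
  "tt D cn C \<beta> 0 = 1"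
| "tt D cn C \<beta> (Suc 0) = nat \<lceil>D\<rceil>"
| "tt D cn C \<beta> (Suc (Suc k)) = nat \<lceil>min cn ((real (tt D cn C \<beta> (Suc k)) * D / (4*C)) powr (1/\<beta>)) / 4\<rceil>"

lemma tt_Suc: "k \<ge> 1 \<Longrightarrow> tt D cn C \<beta> (Suc k) = nat \<lceil>min cn ((real (tt D cn C \<beta> k) * D / (4*C)) powr (1/\<beta>)) / 4\<rceil>"
  by (cases k) auto

lemma ceil_nat1: "(x::real) > 0 \<Longrightarrow> Suc 0 \<le> nat \<lceil>x\<rceil>" by (simp add: Suc_le_eq)

lemma tt_pos:
  assumes "D > 0" "cn > 0" "C > 0"
  shows "tt D cn C \<beta> k \<ge> 1"
proof (induction k rule: nat_less_induct)
  case (1 k)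
  show ?case
  proof (cases k)
    case 0 then show ?thesis by simp
  next
    case (Suc k')
    show ?thesis
    proof (cases k')
      case 0 then show ?thesis using Suc assms by (simp add: Suc_le_eq)
    next
      case (Suc k'')
      have ih: "tt D cn C \<beta> k' \<ge> 1" using 1 \<open>k = Suc k'\<close> by simp
      have "(real (tt D cn C \<beta> k') * D / (4*C)) powr (1/\<beta>) > 0"
        using ih assms by simp
      then have "min cn ((real (tt D cn C \<beta> k') * D / (4*C)) powr (1/\<beta>)) / 4 > 0"
        using assms by simp
      then have "Suc 0 \<le> nat \<lceil>min cn ((real (tt D cn C \<beta> k') * D / (4*C)) powr (1/\<beta>)) / 4\<rceil>"
        by (rule ceil_nat1)
      moreover have "tt D cn C \<beta> k = nat \<lceil>min cn ((real (tt D cn C \<beta> k') * D / (4*C)) powr (1/\<beta>)) / 4\<rceil>"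
        using \<open>k = Suc k'\<close> Suc by simp
      ultimately show ?thesis by simp
    qed
  qed
qed

lemma tt_step:
  fixes D cn C \<beta> m :: real
  assumes D: "D > 0" and C: "C > 0" and b: "\<beta> \<ge> 1" and k: "k \<ge> 1" and m: "m \<ge> 1"
    and sm: "real (tt D cn C \<beta> k) \<le> m" and sc: "real (tt D cn C \<beta> k) < cn/8"
    and big: "32 * 8 powr \<beta> * C * m powr (\<beta>-1) \<le> D"
  shows "2 * tt D cn C \<beta> k \<le> tt D cn C \<beta> (Suc k)"
    and "real (tt D cn C \<beta> (Suc k)) + 1 + 2 * real (tt D cn C \<beta> k)
          \<le> min cn ((real (tt D cn C \<beta> k) * D / (4*C)) powr (1/\<beta>))"
proof -
  define s where "s = real (tt D cn C \<beta> k)"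
  define P where "P = (s * D / (4*C)) powr (1/\<beta>)"
  define M where "M = min cn P"
  have cn: "cn > 0" using sc by simp
  have s1: "s \<ge> 1" unfolding s_def using tt_pos[OF D cn C] by simp
  have eqT: "real (tt D cn C \<beta> (Suc k)) = real_of_int \<lceil>M/4\<rceil>"
  proof -
    have "M \<ge> 0" unfolding M_def P_def using cn by simp
    then show ?thesis unfolding tt_Suc[OF k] M_def P_def s_def by simp
  qed
  have "s powr (\<beta>-1) \<le> m powr (\<beta>-1)" using s1 sm b unfolding s_def by (intro powr_mono2) auto
  then have A: "8 powr \<beta> * s powr (\<beta>-1) * (32*C) \<le> D"
  proof -
    have "8 powr \<beta> * s powr (\<beta>-1) * (32*C) \<le> 8 powr \<beta> * m powr (\<beta>-1) * (32*C)"
      using \<open>s powr (\<beta>-1) \<le> m powr (\<beta>-1)\<close> C by (intro mult_right_mono mult_left_mono) auto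
    also have "\<dots> = 32 * 8 powr \<beta> * C * m powr (\<beta>-1)" by (simp add: mult_ac)
    finally show ?thesis using big by linarith
  qed
  have "(8*s) powr \<beta> = 8 powr \<beta> * (s * s powr (\<beta>-1))"
    using s1 by (simp add: powr_mult powr_diff)
  also have "\<dots> = s * (8 powr \<beta> * s powr (\<beta>-1))" by (simp add: mult_ac)
  also have "\<dots> \<le> s * (D/(32*C))" using A C s1 by (intro mult_left_mono) (auto simp: field_simps)
  also have "\<dots> \<le> s * D / (4*C)" using C D s1 by (simp add: field_simps)
  finally have B: "(8*s) powr \<beta> \<le> s * D / (4*C)" .
  have "8*s = ((8*s) powr \<beta>) powr (1/\<beta>)" using s1 b by (simp add: powr_powr)
  also have "\<dots> \<le> P" unfolding P_def using B b by (intro powr_mono2) auto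
  finally have P8: "8*s \<le> P" .
  have M8: "8*s \<le> M" unfolding M_def using P8 sc s_def by simp
  have lo: "real (tt D cn C \<beta> (Suc k)) \<ge> M/4" using eqT by linarith
  have hi: "real (tt D cn C \<beta> (Suc k)) \<le> M/4 + 1" using eqT by linarith
  show "2 * tt D cn C \<beta> k \<le> tt D cn C \<beta> (Suc k)"
  proof -
    have "real (2 * tt D cn C \<beta> k) \<le> real (tt D cn C \<beta> (Suc k))" using lo M8 unfolding s_def by simp
    then show ?thesis by linarith
  qed
  show "real (tt D cn C \<beta> (Suc k)) + 1 + 2 * real (tt D cn C \<beta> k)
          \<le> min cn ((real (tt D cn C \<beta> k) * D / (4*C)) powr (1/\<beta>))"
  proof -
    have "real (tt D cn C \<beta> (Suc k)) + 1 + 2 * s \<le> M" using hi M8 s1 by linarith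
    then show ?thesis unfolding M_def P_def s_def .
  qed
qed

fun ac :: "real \<Rightarrow> real \<Rightarrow> real \<Rightarrow> nat \<Rightarrow> real" where
  "ac \<delta> C \<beta> 0 = \<delta>"
| "ac \<delta> C \<beta> (Suc k) = (ac \<delta> C \<beta> k * \<delta> / (4*C)) powr (1/\<beta>) / 4"

lemma ac_pos: "\<delta> > 0 \<Longrightarrow> C > 0 \<Longrightarrow> ac \<delta> C \<beta> k > 0"
  by (induction k) auto

lemma tt_growth:
  fixes D cn C \<beta> m \<delta> \<alpha> :: real
  assumes D: "D = \<delta> * m powr (\<alpha>-1)" and d: "\<delta> > 0" and C: "C > 0" and b: "\<beta> \<ge> 1" and m: "m > 0"
    and cn: "cn > 0"
  shows "(\<exists>j\<in>{1..Suc k}. cn/8 \<le> real (tt D cn C \<beta> j)) \<or> ac \<delta> C \<beta> k * m powr (ex \<alpha> \<beta> k) \<le> real (tt D cn C \<beta> (Suc k))"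
proof (induction k)
  case 0
  have "D \<le> real (nat \<lceil>D\<rceil>)" by linarith
  then show ?case using D by simp
next
  case (Suc k)
  show ?case
  proof (cases "\<exists>j\<in>{1..Suc k}. cn/8 \<le> real (tt D cn C \<beta> j)")
    case True then show ?thesis by auto
  next
    case False
    then have ih: "ac \<delta> C \<beta> k * m powr (ex \<alpha> \<beta> k) \<le> real (tt D cn C \<beta> (Suc k))" using Suc by blast
    define s where "s = real (tt D cn C \<beta> (Suc k))"
    define P where "P = (s * D / (4*C)) powr (1/\<beta>)"
    have Dp: "D > 0" using D d m by simp
    have acp: "ac \<delta> C \<beta> k > 0" using ac_pos d C by blast
    have eqT: "real (tt D cn C \<beta> (Suc (Suc k))) = real_of_int \<lceil>min cn P/4\<rceil>"
    proof -
      have "min cn P \<ge> 0" unfolding P_def using cn by simp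
      then show ?thesis unfolding P_def s_def by simp
    qed
    have lo: "real (tt D cn C \<beta> (Suc (Suc k))) \<ge> min cn P/4" using eqT by linarith
    have "(ac \<delta> C \<beta> k * m powr (ex \<alpha> \<beta> k)) * D / (4*C) \<le> s * D / (4*C)"
      using ih Dp C unfolding s_def by (intro divide_right_mono mult_right_mono) auto
    moreover have "(ac \<delta> C \<beta> k * m powr (ex \<alpha> \<beta> k)) * D / (4*C) = (ac \<delta> C \<beta> k * \<delta> / (4*C)) * m powr (ex \<alpha> \<beta> k + (\<alpha> - 1))"
    proof -
      have pe: "m powr (ex \<alpha> \<beta> k + (\<alpha> - 1)) = m powr (ex \<alpha> \<beta> k) * m powr (\<alpha>-1)" by (simp add: powr_add)
      show ?thesis unfolding pe D by (simp add: mult_ac)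
    qed
    ultimately have Q: "(ac \<delta> C \<beta> k * \<delta> / (4*C)) * m powr (ex \<alpha> \<beta> k + (\<alpha> - 1)) \<le> s * D / (4*C)" by simp
    have "4 * (ac \<delta> C \<beta> (Suc k) * m powr (ex \<alpha> \<beta> (Suc k)))
        = ((ac \<delta> C \<beta> k * \<delta> / (4*C)) * m powr (ex \<alpha> \<beta> k + (\<alpha> - 1))) powr (1/\<beta>)"
    proof -
      have nn: "ac \<delta> C \<beta> k * \<delta> / (4*C) \<ge> 0" using acp d C by simp
      have "((ac \<delta> C \<beta> k * \<delta> / (4*C)) * m powr (ex \<alpha> \<beta> k + (\<alpha> - 1))) powr (1/\<beta>)
          = (ac \<delta> C \<beta> k * \<delta> / (4*C)) powr (1/\<beta>) * (m powr (ex \<alpha> \<beta> k + (\<alpha> - 1))) powr (1/\<beta>)"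
        by (rule powr_mult)
      also have "(m powr (ex \<alpha> \<beta> k + (\<alpha> - 1))) powr (1/\<beta>) = m powr ex \<alpha> \<beta> (Suc k)"
        by (simp add: powr_powr add_diff_eq)
      finally show ?thesis by simp
    qed
    also have "\<dots> \<le> P" unfolding P_def using Q acp d C m b by (intro powr_mono2) auto
    finally have P4: "4 * (ac \<delta> C \<beta> (Suc k) * m powr (ex \<alpha> \<beta> (Suc k))) \<le> P" .
    show ?thesis
    proof (cases "cn \<le> P")
      case True
      then have "cn/8 \<le> real (tt D cn C \<beta> (Suc (Suc k)))" using lo cn by simp
      then show ?thesis by force
    next
      case False
      then show ?thesis using lo P4 by simp
    qed
  qed
qed

lemma big_powr:
  fixes b K m :: real
  assumes "b > 0" "m > 0" "m \<ge> K powr (1/b)" "K > 0"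
  shows "K \<le> m powr b"
proof -
  have "K = (K powr (1/b)) powr b" using assms by (simp add: powr_powr)
  also have "\<dots> \<le> m powr b" using assms by (intro powr_mono2) auto
  finally show ?thesis .
qed


definition cross :: "'a set \<Rightarrow> 'a set \<Rightarrow> 'a set set" where
  "cross A B = {{a, b} | a b. a \<in> A \<and> b \<in> B}"

lemma zar_ge:
  fixes P Q :: "nat set" and Ep :: "nat set set"
  assumes "finite P" "finite Q" "P \<inter> Q = {}" "Ep \<subseteq> {{a, b} | a b. a \<in> P \<and> b \<in> Q}" "F_free F (P \<union> Q) Ep"
  shows "card Ep \<le> zar (card P) (card Q) F"
proof -
  define S where "S = {card E | A B (E :: nat set set).
      finite A \<and> finite B \<and> A \<inter> B = {} \<and> card A = card P \<and> card B = card Q \<and>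
      E \<subseteq> {{a, b} | a b. a \<in> A \<and> b \<in> B} \<and> F_free F (A \<union> B) E}"
  have mem: "card Ep \<in> S" unfolding S_def using assms by blast
  have bnd: "S \<subseteq> {..card P * card Q}"
  proof
    fix c assume "c \<in> S"
    then obtain A B and E :: "nat set set" where c: "c = card E" "finite A" "finite B" "card A = card P" "card B = card Q"
      "E \<subseteq> {{a, b} | a b. a \<in> A \<and> b \<in> B}" unfolding S_def cross_def[symmetric] by blast
    have eq: "{{a, b} | a b. a \<in> A \<and> b \<in> B} = (\<lambda>(a,b). {a,b}) ` (A \<times> B)" by auto
    have "card E \<le> card ((\<lambda>(a,b). {a,b}) ` (A \<times> B))"
      using c eq by (intro card_mono) auto
    also have "\<dots> \<le> card (A \<times> B)" by (rule card_image_le) (use c in auto)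
    also have "\<dots> = card P * card Q" using c by (simp add: card_cartesian_product)
    finally show "c \<in> {..card P * card Q}" using c by simp
  qed
  have "finite S" using bnd finite_subset by blast
  then have "card Ep \<le> Max S" using mem by (rule Max_ge)
  then show ?thesis unfolding zar_def S_def .
qed

definition NS :: "'a set \<Rightarrow> 'a set set \<Rightarrow> 'a set \<Rightarrow> 'a set" where
  "NS V E X = {y \<in> V. \<exists>x\<in>X. {x, y} \<in> E}"

definition Nb :: "'a set \<Rightarrow> 'a set set \<Rightarrow> 'a \<Rightarrow> 'a set" where
  "Nb V E x = {y \<in> V. {x, y} \<in> E}"

lemma degree_Nb: "degree V E x = card (Nb V E x)" unfolding degree_def Nb_def by simp

lemma Nb_side:
  assumes "A \<inter> B = {}" "\<forall>e\<in>E. \<exists>a\<in>A. \<exists>b\<in>B. e = {a, b}" "x \<in> A" "y \<in> Nb V E x"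
  shows "y \<in> B"
proof -
  have "{x, y} \<in> E" using assms(4) unfolding Nb_def by simp
  then obtain a b where ab: "a \<in> A" "b \<in> B" "{x, y} = {a, b}" using assms(2) by blast
  then show ?thesis using assms(1,3) by (auto simp: doubleton_eq_iff)
qed

lemma cross_edges:
  fixes V :: "'a set" and E :: "'a set set"
  assumes fin: "finite V" and AB: "A \<inter> B = {}" "A \<union> B = V"
    and edges: "\<forall>e\<in>E. \<exists>a\<in>A. \<exists>b\<in>B. e = {a, b}" and ff: "F_free F V E"
    and XA: "X \<subseteq> A"
  shows "(\<Sum>x\<in>X. degree V E x) \<le> zar (card X) (card (NS V E X)) F"
    and "(\<Sum>x\<in>X. degree V E x) \<le> zar (card (NS V E X)) (card X) F"
proof -
  define Y where "Y = NS V E X"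
  have finX: "finite X" using XA AB fin by (metis finite_Un finite_subset)
  have YB: "Y \<subseteq> B"
  proof
    fix y assume "y \<in> Y"
    then obtain x where "x \<in> X" "y \<in> Nb V E x" unfolding Y_def NS_def Nb_def by blast
    then show "y \<in> B" using Nb_side[OF AB(1) edges] XA by blast
  qed
  have YV: "Y \<subseteq> V" unfolding Y_def NS_def by auto
  have XV: "X \<subseteq> V" using XA AB by auto
  have finY: "finite Y" using YV fin finite_subset by blast
  define Ex where "Ex = (\<lambda>(x,y). {x,y}) ` (SIGMA x:X. Nb V E x)"
  have injp: "inj_on (\<lambda>(x,y). {x,y}) (SIGMA x:X. Nb V E x)"
  proof (rule inj_onI, clarsimp)
    fix x y x' y' assume h: "x \<in> X" "y \<in> Nb V E x" "x' \<in> X" "y' \<in> Nb V E x'" "{x, y} = {x', y'}"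
    have "y \<in> B" "y' \<in> B" using h Nb_side[OF AB(1) edges] XA by blast+
    moreover have "x \<in> A" "x' \<in> A" using h XA by auto
    ultimately show "x = x' \<and> y = y'" using h(5) AB(1) by (auto simp: doubleton_eq_iff)
  qed
  have finNb: "\<And>x. finite (Nb V E x)" unfolding Nb_def using fin by simp
  have cardEx: "card Ex = (\<Sum>x\<in>X. degree V E x)"
    unfolding Ex_def card_image[OF injp] using finX finNb by (simp add: card_SigmaI degree_Nb)
  have ExE: "Ex \<subseteq> E" unfolding Ex_def Nb_def by auto
  have ExV: "\<forall>e\<in>Ex. e \<subseteq> V" unfolding Ex_def Nb_def using XV by auto
  obtain h :: "'a \<Rightarrow> nat" and nn where h: "h ` V = {i. i < nn}" "inj_on h V"
    using finite_imp_inj_to_nat_seg[OF fin] by blast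
  define P where "P = h ` X"
  define Q where "Q = h ` Y"
  define Ep where "Ep = image h ` Ex"
  have cP: "card P = card X" unfolding P_def using h(2) XV by (meson card_image inj_on_subset)
  have cQ: "card Q = card Y" unfolding Q_def using h(2) YV by (meson card_image inj_on_subset)
  have PQ: "P \<inter> Q = {}"
  proof -
    have "X \<inter> Y = {}" using XA YB AB(1) by auto
    then show ?thesis using inj_on_image_Int[OF h(2) XV YV] unfolding P_def Q_def by (metis image_empty)
  qed
  have injE: "inj_on (image h) Ex"
  proof (rule inj_onI)
    fix e e' assume ee: "e \<in> Ex" "e' \<in> Ex" "h ` e = h ` e'"
    then have "e \<subseteq> V" "e' \<subseteq> V" using ExV by auto
    then show "e = e'" using inj_on_image_eq_iff[OF h(2)] ee(3) by simp
  qed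
  have cEp: "card Ep = card Ex" unfolding Ep_def using injE by (simp add: card_image)
  have EpX: "Ep \<subseteq> {{a, b} | a b. a \<in> P \<and> b \<in> Q}"
  proof
    fix e assume "e \<in> Ep"
    then obtain x y where "x \<in> X" "y \<in> Nb V E x" "e = h ` {x,y}" unfolding Ep_def Ex_def by blast
    moreover have "y \<in> Y" using calculation unfolding Y_def NS_def Nb_def by auto
    ultimately show "e \<in> {{a, b} | a b. a \<in> P \<and> b \<in> Q}" unfolding P_def Q_def by auto
  qed
  have EpX': "Ep \<subseteq> {{a, b} | a b. a \<in> Q \<and> b \<in> P}"
  proof
    fix e assume "e \<in> Ep"
    then obtain a b where ab: "e = {a,b}" "a \<in> P" "b \<in> Q" using EpX by blast
    then have "e = {b,a}" by (simp add: insert_commute)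
    then show "e \<in> {{a, b} | a b. a \<in> Q \<and> b \<in> P}" using ab by blast
  qed
  have ffE: "F_free F (P \<union> Q) Ep"
    unfolding F_free_def
  proof
    assume "\<exists>H\<in>F. contains_subgraph (P \<union> Q) Ep H"
    then obtain H f where H: "H \<in> F" "inj_on f (fst H)" "f ` fst H \<subseteq> P \<union> Q" "\<forall>e\<in>snd H. f ` e \<in> Ep"
      unfolding contains_subgraph_def by blast
    define g where "g = inv_into V h \<circ> f"
    have PQV: "P \<union> Q \<subseteq> h ` V" unfolding P_def Q_def using XV YV by auto
    have "inj_on g (fst H)" unfolding g_def
      using H(2,3) PQV by (intro comp_inj_on inj_on_inv_into) auto
    moreover have "g ` fst H \<subseteq> V"
    proof
      fix z assume "z \<in> g ` fst H"
      then obtain x where x: "x \<in> fst H" "z = inv_into V h (f x)" unfolding g_def by force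
      then have "f x \<in> h ` V" using H(3) PQV by auto
      then show "z \<in> V" using x(2) inv_into_into by metis
    qed
    moreover have "\<forall>e\<in>snd H. g ` e \<in> E"
    proof
      fix e assume "e \<in> snd H"
      then have "f ` e \<in> image h ` Ex" using H(4) unfolding Ep_def by simp
      then obtain e0 where e0': "f ` e = h ` e0" "e0 \<in> Ex" by (rule imageE)
      have e0: "e0 \<in> Ex" "f ` e = h ` e0" using e0' by auto
      have "g ` e = inv_into V h ` (f ` e)" unfolding g_def by (rule image_comp[symmetric])
      also have "\<dots> = inv_into V h ` (h ` e0)" using e0(2) by simp
      also have "\<dots> = e0" using e0(1) ExV h(2) by (simp add: inv_into_image_cancel)
      finally show "g ` e \<in> E" using e0(1) ExE by auto
    qed
    ultimately have "contains_subgraph V E H" unfolding contains_subgraph_def by blast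
    then show False using ff H(1) unfolding F_free_def by blast
  qed
  have finP: "finite P" "finite Q" unfolding P_def Q_def using finX finY by auto
  have z1: "card Ep \<le> zar (card P) (card Q) F" by (rule zar_ge[OF finP PQ EpX ffE])
  have z2: "card Ep \<le> zar (card Q) (card P) F"
    by (rule zar_ge[OF finP(2,1)]) (use PQ EpX' ffE in \<open>auto simp: Un_commute Int_commute\<close>)
  show "(\<Sum>x\<in>X. degree V E x) \<le> zar (card X) (card (NS V E X)) F"
    using z1 cP cQ cEp cardEx unfolding Y_def by simp
  show "(\<Sum>x\<in>X. degree V E x) \<le> zar (card (NS V E X)) (card X) F"
    using z2 cP cQ cEp cardEx unfolding Y_def by simp
qed


lemma greedy:
  fixes X :: "'a set" and N :: "'a \<Rightarrow> 'a set" and T :: "'a set" and K :: nat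
  assumes "finite X" "\<forall>a\<in>X. finite (N a)"
  shows "\<exists>Y p. finite Y \<and> Y \<inter> T = {} \<and> (\<forall>y\<in>Y. p y \<in> X \<and> y \<in> N (p y)) \<and>
     (\<forall>a\<in>X. card {y\<in>Y. p y = a} \<le> K) \<and>
     (\<forall>a\<in>X. card {y\<in>Y. p y = a} = K \<or> N a \<subseteq> Y \<union> T)"
  using assms
proof (induction X rule: finite_induct)
  case empty
  show ?case by (rule exI[of _ "{}"]) simp
next
  case (insert a X)
  then obtain Y p where Yp: "finite Y" "Y \<inter> T = {}" "\<forall>y\<in>Y. p y \<in> X \<and> y \<in> N (p y)"
     "\<forall>b\<in>X. card {y\<in>Y. p y = b} \<le> K" "\<forall>b\<in>X. card {y\<in>Y. p y = b} = K \<or> N b \<subseteq> Y \<union> T"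
    by auto
  define R where "R = N a - Y - T"
  have finR: "finite R" unfolding R_def using insert.prems by auto
  obtain R' where R': "R' \<subseteq> R" "card R' \<le> K" "card R' = K \<or> R' = R"
  proof (cases "K \<le> card R")
    case True
    then obtain R' where "R' \<subseteq> R" "card R' = K" using obtain_subset_with_card_n by metis
    then show ?thesis using that by auto
  next
    case False
    then show ?thesis using that[of R] by auto
  qed
  have finR': "finite R'" using R'(1) finR finite_subset by blast
  define Y' where "Y' = Y \<union> R'"
  define p' where "p' = (\<lambda>y. if y \<in> R' then a else p y)"
  have RY: "R' \<inter> Y = {}" using R'(1) unfolding R_def by auto
  have fa: "{y\<in>Y'. p' y = a} = R'"
  proof -
    have "\<And>y. y \<in> Y \<Longrightarrow> y \<notin> R' \<Longrightarrow> p y \<noteq> a" using Yp(3) insert.hyps(2) by metis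
    then show ?thesis unfolding Y'_def p'_def by auto
  qed
  have fb: "\<And>b. b \<in> X \<Longrightarrow> {y\<in>Y'. p' y = b} = {y\<in>Y. p y = b}"
    unfolding Y'_def p'_def using RY insert.hyps(2) by auto
  show ?case
  proof (intro exI conjI)
    show "finite Y'" unfolding Y'_def using Yp(1) finR' by simp
    show "Y' \<inter> T = {}" unfolding Y'_def using Yp(2) R'(1) unfolding R_def by auto
    show "\<forall>y\<in>Y'. p' y \<in> insert a X \<and> y \<in> N (p' y)"
      unfolding Y'_def p'_def using Yp(3) R'(1) unfolding R_def by auto
    show "\<forall>b\<in>insert a X. card {y\<in>Y'. p' y = b} \<le> K"
      using fa fb Yp(4) R'(2) by auto
    show "\<forall>b\<in>insert a X. card {y\<in>Y'. p' y = b} = K \<or> N b \<subseteq> Y' \<union> T"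
    proof
      fix b assume b: "b \<in> insert a X"
      show "card {y\<in>Y'. p' y = b} = K \<or> N b \<subseteq> Y' \<union> T"
      proof (cases "b = a")
        case True
        then show ?thesis using fa R'(3) unfolding Y'_def R_def by auto
      next
        case False
        then have "b \<in> X" using b by auto
        then show ?thesis using fb Yp(5) unfolding Y'_def by auto
      qed
    qed
  qed
qed


definition desc :: "'a set \<Rightarrow> ('a \<Rightarrow> nat) \<Rightarrow> ('a \<Rightarrow> 'a) \<Rightarrow> 'a \<Rightarrow> nat \<Rightarrow> 'a set" where
  "desc W dep par w i = {v\<in>W. dep v = i \<and> (par ^^ (i - dep w)) v = w}"

definition tree_ok :: "'a set \<Rightarrow> 'a set set \<Rightarrow> 'a \<Rightarrow> nat \<Rightarrow> (nat \<Rightarrow> nat) \<Rightarrow> 'a set \<Rightarrow> ('a \<Rightarrow> nat) \<Rightarrow> ('a \<Rightarrow> 'a) \<Rightarrow> bool" where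
  "tree_ok V E u k t W dep par \<longleftrightarrow> finite W \<and> W \<subseteq> V \<and> u \<in> W \<and> dep u = 0 \<and> par u = u \<and>
    (\<forall>v\<in>W. v \<noteq> u \<longrightarrow> par v \<in> W \<and> Suc (dep (par v)) = dep v \<and> {par v, v} \<in> E) \<and>
    (\<forall>v\<in>W. dep v = 0 \<longrightarrow> v = u) \<and> (\<forall>v\<in>W. dep v \<le> k) \<and>
    (\<forall>j. 1 \<le> j \<and> j \<le> k \<longrightarrow> card {v\<in>W. dep v = j} = t j) \<and>
    card W \<le> 1 + 2 * t k \<and>
    (\<forall>w\<in>W. w \<noteq> u \<longrightarrow> (\<forall>i. dep w \<le> i \<longrightarrow>
        real (card (desc W dep par w i)) \<le> 3^(i - dep w) * real (t i) / real (t (dep w))))"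

lemma tree_iter:
  assumes "tree_ok V E u k t W dep par" "v \<in> W"
  shows "(par^^m) v \<in> W \<and> dep ((par^^m) v) = dep v - m"
proof (induction m)
  case 0 then show ?case using assms(2) by simp
next
  case (Suc m)
  define z where "z = (par^^m) v"
  have z: "z \<in> W" "dep z = dep v - m" using Suc unfolding z_def by auto
  have T: "dep u = 0" "par u = u" "\<forall>v\<in>W. v \<noteq> u \<longrightarrow> par v \<in> W \<and> Suc (dep (par v)) = dep v"
    using assms(1) unfolding tree_ok_def by auto
  have "par z \<in> W \<and> dep (par z) = dep v - Suc m"
  proof (cases "z = u")
    case True then show ?thesis using T z by auto
  next
    case False then show ?thesis using T z by force
  qed
  then show ?case unfolding z_def by simp
qed

lemma iter_agree:
  assumes "\<forall>x\<in>W. par' x = par x" "\<forall>x\<in>W. par x \<in> W" "v \<in> W"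
  shows "(par'^^m) v = (par^^m) v \<and> (par^^m) v \<in> W"
  by (induction m) (use assms in auto)

lemma tree_base:
  assumes u: "u \<in> V" and X1: "X1 \<subseteq> Nb V E u" "card X1 = t 1" and fin: "finite V"
    and uX: "u \<notin> X1" and t1: "t 1 \<ge> 1"
  shows "tree_ok V E u 1 t (insert u X1) (\<lambda>x. if x \<in> X1 then 1 else 0) (\<lambda>x. u)"
proof -
  define W where "W = insert u X1"
  define dep where "dep = (\<lambda>x. if x \<in> X1 then 1 else (0::nat))"
  have XV: "X1 \<subseteq> V" using X1 unfolding Nb_def by auto
  have finX: "finite X1" using XV fin finite_subset by blast
  have desc1: "\<And>w i. w \<in> X1 \<Longrightarrow> desc W dep (\<lambda>x. u) w i = (if i = 1 then {w} else {})"
  proof -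
    fix w i assume w: "w \<in> X1"
    show "desc W dep (\<lambda>x. u) w i = (if i = 1 then {w} else {})"
    proof (cases "i = 1")
      case True then show ?thesis unfolding desc_def W_def dep_def using w uX by auto
    next
      case False
      have "\<And>v. v \<in> W \<Longrightarrow> dep v = i \<Longrightarrow> 1 \<le> i \<Longrightarrow> False" unfolding W_def dep_def using False uX
        by (auto split: if_splits)
      then have "desc W dep (\<lambda>x. u) w i = {}" if "1 \<le> i" unfolding desc_def using that by blast
      moreover have "desc W dep (\<lambda>x. u) w 0 = {}" unfolding desc_def dep_def W_def using w uX by auto
      ultimately show ?thesis using False by (cases i) auto
    qed
  qed
  have lev: "{v\<in>W. dep v = 1} = X1" unfolding W_def dep_def using uX by auto
  show ?thesis unfolding W_def[symmetric] dep_def[symmetric] tree_ok_def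
  proof (intro conjI)
    show "finite W" unfolding W_def using finX by simp
    show "W \<subseteq> V" unfolding W_def using XV u by simp
    show "u \<in> W" unfolding W_def by simp
    show "dep u = 0" unfolding dep_def using uX by simp
    show "(\<lambda>x. u) u = u" by simp
    show "\<forall>v\<in>W. v \<noteq> u \<longrightarrow> u \<in> W \<and> Suc (dep u) = dep v \<and> {u, v} \<in> E"
      unfolding W_def dep_def using uX X1(1) unfolding Nb_def by auto
    show "\<forall>v\<in>W. dep v = 0 \<longrightarrow> v = u" unfolding W_def dep_def by auto
    show "\<forall>v\<in>W. dep v \<le> 1" unfolding dep_def by auto
    show "\<forall>j. 1 \<le> j \<and> j \<le> 1 \<longrightarrow> card {v\<in>W. dep v = j} = t j"
    proof (intro allI impI)
      fix j :: nat assume "1 \<le> j \<and> j \<le> 1"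
      then have "j = 1" by simp
      then show "card {v\<in>W. dep v = j} = t j" using lev X1(2) by simp
    qed
    show "card W \<le> 1 + 2 * t 1" unfolding W_def using finX uX X1(2) by simp
    show "\<forall>w\<in>W. w \<noteq> u \<longrightarrow> (\<forall>i. dep w \<le> i \<longrightarrow>
        real (card (desc W dep (\<lambda>x. u) w i)) \<le> 3^(i - dep w) * real (t i) / real (t (dep w)))"
    proof (intro ballI impI allI)
      fix w i assume w: "w \<in> W" "w \<noteq> u" "dep w \<le> i"
      then have wX: "w \<in> X1" unfolding W_def by auto
      show "real (card (desc W dep (\<lambda>x. u) w i)) \<le> 3^(i - dep w) * real (t i) / real (t (dep w))"
      proof (cases "i = 1")
        case True then show ?thesis using desc1[OF wX] wX t1 unfolding dep_def by simp
      next
        case False then show ?thesis using desc1[OF wX] by simp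
      qed
    qed
  qed
qed


lemma tree_step:
  assumes T: "tree_ok V E u k t W dep par" and k: "k \<ge> 1"
    and Y: "finite Y" "Y \<subseteq> V" "Y \<inter> W = {}" "card Y = t (Suc k)"
    and p: "\<forall>y\<in>Y. p y \<in> W \<and> dep (p y) = k \<and> {p y, y} \<in> E"
    and cap: "\<forall>z\<in>W. dep z = k \<longrightarrow> card {y\<in>Y. p y = z} \<le> Kk"
    and Kk: "real Kk \<le> 3 * real (t (Suc k)) / real (t k)"
    and grow: "2 * t k \<le> t (Suc k)" and tk: "t k \<ge> 1"
  shows "tree_ok V E u (Suc k) t (W \<union> Y) (\<lambda>x. if x \<in> Y then Suc k else dep x) (\<lambda>x. if x \<in> Y then p x else par x)"
proof -
  define W' where "W' = W \<union> Y"
  define dep' where "dep' = (\<lambda>x. if x \<in> Y then Suc k else dep x)"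
  define par' where "par' = (\<lambda>x. if x \<in> Y then p x else par x)"
  have T0: "finite W" "W \<subseteq> V" "u \<in> W" "dep u = 0" "par u = u"
    "\<forall>v\<in>W. v \<noteq> u \<longrightarrow> par v \<in> W \<and> Suc (dep (par v)) = dep v \<and> {par v, v} \<in> E"
    "\<forall>v\<in>W. dep v = 0 \<longrightarrow> v = u" "\<forall>v\<in>W. dep v \<le> k"
    "\<forall>j. 1 \<le> j \<and> j \<le> k \<longrightarrow> card {v\<in>W. dep v = j} = t j"
    "card W \<le> 1 + 2 * t k"
    "\<forall>w\<in>W. w \<noteq> u \<longrightarrow> (\<forall>i. dep w \<le> i \<longrightarrow>
        real (card (desc W dep par w i)) \<le> 3^(i - dep w) * real (t i) / real (t (dep w)))"
    using T unfolding tree_ok_def by blast+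
  have uY: "u \<notin> Y" using Y(3) T0(3) by auto
  have parW: "\<forall>x\<in>W. par x \<in> W" using T0(3,5,6) by metis
  have agree: "\<forall>x\<in>W. par' x = par x" unfolding par'_def using Y(3) by auto
  have depW: "\<forall>x\<in>W. dep' x = dep x" unfolding dep'_def using Y(3) by auto
  have it: "\<And>v m. v \<in> W \<Longrightarrow> (par'^^m) v = (par^^m) v" using iter_agree[OF agree parW] by blast
  have tS: "t (Suc k) \<ge> 1" using grow tk by simp
  have finY': "finite W'" unfolding W'_def using T0(1) Y(1) by simp
  have descW: "\<And>w i. w \<in> W \<Longrightarrow> i \<le> k \<Longrightarrow> desc W' dep' par' w i = desc W dep par w i"
  proof -
    fix w i assume w: "w \<in> W" and i: "i \<le> k"
    show "desc W' dep' par' w i = desc W dep par w i"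
      unfolding desc_def W'_def using depW w i it by (auto simp: dep'_def)
  qed
  have desc_big: "\<And>w i. w \<in> W' \<Longrightarrow> i > Suc k \<Longrightarrow> desc W' dep' par' w i = {}"
  proof -
    fix w i assume "i > Suc k"
    moreover have "\<forall>v\<in>W'. dep' v \<le> Suc k" unfolding W'_def dep'_def using T0(8) by auto
    ultimately show "desc W' dep' par' w i = {}" unfolding desc_def by fastforce
  qed
  have levY: "{v\<in>W'. dep' v = Suc k} = Y"
    unfolding W'_def dep'_def using T0(8) Y(3) by fastforce
  show ?thesis unfolding W'_def[symmetric] dep'_def[symmetric] par'_def[symmetric] tree_ok_def
  proof (intro conjI)
    show "finite W'" by (rule finY')
    show "W' \<subseteq> V" unfolding W'_def using T0(2) Y(2) by simp
    show "u \<in> W'" unfolding W'_def using T0(3) by simp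
    show "dep' u = 0" unfolding dep'_def using uY T0(4) by simp
    show "par' u = u" unfolding par'_def using uY T0(5) by simp
    show "\<forall>v\<in>W'. v \<noteq> u \<longrightarrow> par' v \<in> W' \<and> Suc (dep' (par' v)) = dep' v \<and> {par' v, v} \<in> E"
    proof (intro ballI impI)
      fix v assume v: "v \<in> W'" "v \<noteq> u"
      show "par' v \<in> W' \<and> Suc (dep' (par' v)) = dep' v \<and> {par' v, v} \<in> E"
      proof (cases "v \<in> Y")
        case True
        then have "p v \<in> W" "dep (p v) = k" "{p v, v} \<in> E" using p by auto
        moreover have "p v \<notin> Y" using \<open>p v \<in> W\<close> Y(3) by auto
        ultimately show ?thesis using True unfolding par'_def dep'_def W'_def by simp
      next
        case False
        then have vW: "v \<in> W" using v unfolding W'_def by auto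
        then have "par v \<in> W" "Suc (dep (par v)) = dep v" "{par v, v} \<in> E" using T0(6) v(2) by auto
        moreover have "par v \<notin> Y" using \<open>par v \<in> W\<close> Y(3) by auto
        ultimately show ?thesis using False unfolding par'_def dep'_def W'_def by simp
      qed
    qed
    show "\<forall>v\<in>W'. dep' v = 0 \<longrightarrow> v = u" unfolding W'_def dep'_def using T0(7) by auto
    show "\<forall>v\<in>W'. dep' v \<le> Suc k" unfolding W'_def dep'_def using T0(8) by auto
    show "\<forall>j. 1 \<le> j \<and> j \<le> Suc k \<longrightarrow> card {v\<in>W'. dep' v = j} = t j"
    proof (intro allI impI)
      fix j :: nat assume j: "1 \<le> j \<and> j \<le> Suc k"
      show "card {v\<in>W'. dep' v = j} = t j"
      proof (cases "j = Suc k")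
        case True then show ?thesis using levY Y(4) by simp
      next
        case False
        then have "{v\<in>W'. dep' v = j} = {v\<in>W. dep v = j}" unfolding W'_def dep'_def using j Y(3) by auto
        then show ?thesis using T0(9) j False by simp
      qed
    qed
    show "card W' \<le> 1 + 2 * t (Suc k)"
    proof -
      have "card W' = card W + card Y" unfolding W'_def using T0(1) Y(1,3) card_Un_disjoint[of W Y] by (simp add: Int_commute)
      then show ?thesis using T0(10) Y(4) grow by simp
    qed
    show "\<forall>w\<in>W'. w \<noteq> u \<longrightarrow> (\<forall>i. dep' w \<le> i \<longrightarrow>
        real (card (desc W' dep' par' w i)) \<le> 3^(i - dep' w) * real (t i) / real (t (dep' w)))"
    proof (intro ballI impI allI)
      fix w i assume w: "w \<in> W'" "w \<noteq> u" "dep' w \<le> i"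
      show "real (card (desc W' dep' par' w i)) \<le> 3^(i - dep' w) * real (t i) / real (t (dep' w))"
      proof (cases "i > Suc k")
        case True then show ?thesis using desc_big[OF w(1) True] by simp
      next
        case False
        show ?thesis
        proof (cases "w \<in> Y")
          case True
          then have dw: "dep' w = Suc k" unfolding dep'_def by simp
          then have i: "i = Suc k" using False w(3) by simp
          have "desc W' dep' par' w i = {w}" unfolding desc_def i dw W'_def using levY True
            unfolding dep'_def by auto
          then show ?thesis using i dw tS by simp
        next
          case wY: False
          then have wW: "w \<in> W" using w(1) unfolding W'_def by auto
          have dw: "dep' w = dep w" using depW wW by simp
          show ?thesis
          proof (cases "i \<le> k")
            case True
            then show ?thesis using descW[OF wW True] T0(11) wW w(2,3) dw by simp
          next
            case ik: False
            then have i: "i = Suc k" using False by simp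
            define j where "j = dep w"
            have j1: "j \<ge> 1" using T0(7) wW w(2) unfolding j_def by (cases "dep w") auto
            have jk: "j \<le> k" using T0(8) wW unfolding j_def by simp
            define Dk where "Dk = desc W dep par w k"
            have finDk: "finite Dk" unfolding Dk_def desc_def using T0(1) by simp
            have sub: "desc W' dep' par' w i \<subseteq> (\<Union>z\<in>Dk. {y\<in>Y. p y = z})"
            proof
              fix v assume "v \<in> desc W' dep' par' w i"
              then have v: "v \<in> W'" "dep' v = Suc k" "(par'^^(Suc k - j)) v = w"
                unfolding desc_def i dw j_def by auto
              have vY: "v \<in> Y" using v(1,2) levY by blast
              have "Suc k - j = Suc (k - j)" using jk by simp
              then have "(par'^^(Suc k - j)) v = (par'^^(k - j)) (par' v)"
                by (metis funpow_Suc_right comp_apply)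
              also have "par' v = p v" unfolding par'_def using vY by simp
              also have "(par'^^(k - j)) (p v) = (par^^(k - j)) (p v)" using it p vY by blast
              finally have "(par^^(k - j)) (p v) = w" using v(3) by simp
              moreover have "p v \<in> W" "dep (p v) = k" using p vY by auto
              ultimately have "p v \<in> Dk" unfolding Dk_def desc_def j_def by simp
              then show "v \<in> (\<Union>z\<in>Dk. {y\<in>Y. p y = z})" using vY by blast
            qed
            have "card (desc W' dep' par' w i) \<le> card (\<Union>z\<in>Dk. {y\<in>Y. p y = z})"
              using sub finDk Y(1) by (intro card_mono) auto
            also have "\<dots> \<le> (\<Sum>z\<in>Dk. card {y\<in>Y. p y = z})" by (rule card_UN_le[OF finDk])
            also have "\<dots> \<le> (\<Sum>z\<in>Dk. Kk)"
              using cap unfolding Dk_def desc_def by (intro sum_mono) auto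
            also have "\<dots> = card Dk * Kk" by simp
            finally have c1: "real (card (desc W' dep' par' w i)) \<le> real (card Dk) * real Kk"
              by (metis of_nat_le_iff of_nat_mult)
            have c2: "real (card Dk) \<le> 3^(k - j) * real (t k) / real (t j)"
              using T0(11) wW w(2) jk unfolding Dk_def j_def by simp
            have tj: "real (t j) > 0"
            proof -
              have "t j = card {v\<in>W. dep v = j}" using T0(9) j1 jk by simp
              moreover have "w \<in> {v\<in>W. dep v = j}" using wW unfolding j_def by simp
              moreover have "finite {v\<in>W. dep v = j}" using T0(1) by simp
              ultimately show ?thesis by (metis card_gt_0_iff empty_iff of_nat_0_less_iff)
            qed
            have "real (card Dk) * real Kk \<le> (3^(k - j) * real (t k) / real (t j)) * (3 * real (t (Suc k)) / real (t k))"
              using c2 Kk by (intro mult_mono) auto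
            also have "\<dots> = 3^(Suc k - j) * real (t (Suc k)) / real (t j)"
            proof -
              have "Suc k - j = Suc (k - j)" using jk by simp
              moreover have "real (t k) > 0" using tk by simp
              ultimately show ?thesis by (simp add: field_simps)
            qed
            finally show ?thesis using c1 i dw j_def by simp
          qed
        qed
      qed
    qed
  qed
qed


definition tpath :: "('a \<Rightarrow> 'a) \<Rightarrow> ('a \<Rightarrow> nat) \<Rightarrow> 'a \<Rightarrow> 'a list" where
  "tpath par dep v = map (\<lambda>i. (par^^(dep v - i)) v) [0..<Suc (dep v)]"

lemma tree_path:
  assumes T: "tree_ok V E u k t W dep par" and v: "v \<in> W"
  shows "is_path V E u v (tpath par dep v) \<and> length (tpath par dep v) - 1 \<le> k"
proof -
  define d where "d = dep v"
  have T0: "W \<subseteq> V" "u \<in> W" "dep u = 0"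
    "\<forall>v\<in>W. v \<noteq> u \<longrightarrow> par v \<in> W \<and> Suc (dep (par v)) = dep v \<and> {par v, v} \<in> E"
    "\<forall>v\<in>W. dep v = 0 \<longrightarrow> v = u" "\<forall>v\<in>W. dep v \<le> k"
    using T unfolding tree_ok_def by blast+
  have it: "\<And>m. (par^^m) v \<in> W \<and> dep ((par^^m) v) = d - m" using tree_iter[OF T v] unfolding d_def by blast
  have len: "length (tpath par dep v) = Suc d" unfolding tpath_def d_def by simp
  have ne: "tpath par dep v \<noteq> []" using len by auto
  have nth: "\<And>i. i < Suc d \<Longrightarrow> tpath par dep v ! i = (par^^(d - i)) v"
    unfolding tpath_def d_def by (simp del: upt_Suc)
  have "is_path V E u v (tpath par dep v)"
    unfolding is_path_def
  proof (intro conjI)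
    show "tpath par dep v \<noteq> []" using len by auto
    show "hd (tpath par dep v) = u"
    proof -
      have "hd (tpath par dep v) = tpath par dep v ! 0" by (rule hd_conv_nth[OF ne])
      also have "\<dots> = (par^^d) v" using nth by simp
      also have "\<dots> = u" using it[of d] T0(5) by simp
      finally show ?thesis .
    qed
    show "last (tpath par dep v) = v"
    proof -
      have "last (tpath par dep v) = tpath par dep v ! d" using len last_conv_nth[OF ne] by simp
      also have "\<dots> = v" using nth by simp
      finally show ?thesis .
    qed
    show "distinct (tpath par dep v)"
    proof -
      have "inj_on (\<lambda>i. (par^^(dep v - i)) v) {0..<Suc (dep v)}"
      proof (rule inj_onI)
        fix i i' assume "i \<in> {0..<Suc (dep v)}" "i' \<in> {0..<Suc (dep v)}"
          "(par^^(dep v - i)) v = (par^^(dep v - i')) v"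
        then show "i = i'" using it[of "dep v - i"] it[of "dep v - i'"] unfolding d_def
          by (metis atLeastLessThan_iff diff_diff_cancel less_Suc_eq_le)
      qed
      then show ?thesis unfolding tpath_def distinct_map by (simp del: upt_Suc)
    qed
    show "set (tpath par dep v) \<subseteq> V" unfolding tpath_def using it T0(1) d_def v by auto
    show "\<forall>i. Suc i < length (tpath par dep v) \<longrightarrow> {tpath par dep v ! i, tpath par dep v ! Suc i} \<in> E"
    proof (intro allI impI)
      fix i assume i: "Suc i < length (tpath par dep v)"
      define z where "z = (par^^(d - Suc i)) v"
      have z: "z \<in> W" "dep z = Suc i" using it[of "d - Suc i"] i len unfolding z_def by auto
      have zu: "z \<noteq> u" using z T0(3) by auto
      have "d - i = Suc (d - Suc i)" using i len by simp
      then have "tpath par dep v ! i = par z" using nth[of i] i len unfolding z_def by simp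
      moreover have "tpath par dep v ! Suc i = z" using nth[of "Suc i"] i len unfolding z_def by simp
      ultimately show "{tpath par dep v ! i, tpath par dep v ! Suc i} \<in> E" using T0(4) z zu by simp
    qed
  qed
  moreover have "length (tpath par dep v) - 1 \<le> k" using len T0(6) v unfolding d_def by simp
  ultimately show ?thesis by blast
qed

lemma tree_load:
  assumes T: "tree_ok V E u k t W dep par" and w: "w \<in> W"
  shows "{v\<in>W. w \<in> set (tpath par dep v)} \<subseteq> (\<Union>i\<in>{dep w..k}. desc W dep par w i)"
proof
  fix v assume "v \<in> {v\<in>W. w \<in> set (tpath par dep v)}"
  then have v: "v \<in> W" "w \<in> set (tpath par dep v)" by auto
  have "w \<in> (\<lambda>i. (par^^(dep v - i)) v) ` {0..<Suc (dep v)}" using v(2) unfolding tpath_def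
    by (simp only: set_map set_upt)
  then obtain i where i0: "i \<in> {0..<Suc (dep v)}" "w = (par^^(dep v - i)) v" by blast
  then have i: "i < Suc (dep v)" "w = (par^^(dep v - i)) v" by auto
  have "dep w = dep v - (dep v - i)" using tree_iter[OF T v(1)] i(2) by simp
  then have dw: "dep w = i" using i(1) by simp
  have "dep v \<le> k" using T v(1) unfolding tree_ok_def by blast
  then have "v \<in> desc W dep par w (dep v)" "dep v \<in> {dep w..k}"
    unfolding desc_def using v(1) i dw by auto
  then show "v \<in> (\<Union>i\<in>{dep w..k}. desc W dep par w i)" by blast
qed


lemma NS_Un: "NS V E X = (\<Union>a\<in>X. Nb V E a)" unfolding NS_def Nb_def by auto

lemma extend:
  fixes V :: "'a set" and E F and D m \<rho> \<alpha> \<beta> \<delta> C c1 :: real and n :: nat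
  assumes fin: "finite V" and cV: "card V \<le> n" and ff: "F_free F V E"
    and Hz: "\<forall>m n. 0 < m \<longrightarrow> m \<le> n \<longrightarrow> real (zar m n F) \<le> \<rho> * real m * real n powr (\<alpha> - 1) + C * real n powr \<beta>"
    and deg: "\<forall>x\<in>V. real (degree V E x) \<ge> D"
    and D: "D = \<delta> * m powr (\<alpha> - 1)" and m: "m = real n" "m \<ge> 1"
    and small: "2*C*m powr (\<beta>-1) < D"
    and par: "\<rho> > 0" "1 < \<alpha>" "\<alpha> < 2" "1 \<le> \<beta>" "\<delta> > 0" "C > 0"
    and c1: "c1 = (\<delta>/(2*\<rho>)) powr (1/(\<alpha>-1))"
    and AB: "A' \<inter> B' = {}" "A' \<union> B' = V" "\<forall>e\<in>E. \<exists>a\<in>A'. \<exists>b\<in>B'. e = {a, b}"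
    and T: "tree_ok V E u k t W dep par" and XA: "{v\<in>W. dep v = k} \<subseteq> A'"
    and k: "k \<ge> 1" and tk: "t k \<ge> 1"
    and grow: "2 * t k \<le> t (Suc k)"
    and room: "real (t (Suc k)) + 1 + 2 * real (t k) \<le> min (c1 * m) ((real (t k) * D / (4*C)) powr (1/\<beta>))"
  shows "\<exists>W' dep' par'. tree_ok V E u (Suc k) t W' dep' par' \<and> {v\<in>W'. dep' v = Suc k} \<subseteq> B'"
proof -
  define X where "X = {v\<in>W. dep v = k}"
  have T0: "finite W" "W \<subseteq> V" "card X = t k" "card W \<le> 1 + 2 * t k"
    using T k unfolding tree_ok_def X_def by auto
  have finX: "finite X" unfolding X_def using T0(1) by simp
  have XV: "X \<subseteq> V" unfolding X_def using T0(2) by auto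
  define K where "K = nat \<lceil>2 * real (t (Suc k)) / real (t k)\<rceil>"
  have finNb: "\<forall>a\<in>X. finite (Nb V E a)" unfolding Nb_def using fin by simp
  obtain Y p where Yp: "finite Y" "Y \<inter> W = {}" "\<forall>y\<in>Y. p y \<in> X \<and> y \<in> Nb V E (p y)"
     "\<forall>a\<in>X. card {y\<in>Y. p y = a} \<le> K" "\<forall>a\<in>X. card {y\<in>Y. p y = a} = K \<or> Nb V E a \<subseteq> Y \<union> W"
    using greedy[OF finX finNb, of W K] by blast
  have YV: "Y \<subseteq> V" using Yp(3) unfolding Nb_def by auto
  have Dpos: "D > 0" using small par by (smt (verit) mult_nonneg_nonneg powr_ge_zero)
  have Kge: "real K \<ge> 2 * real (t (Suc k)) / real (t k)" unfolding K_def by linarith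
  define Full where "Full = {a\<in>X. card {y\<in>Y. p y = a} = K}"
  define Part where "Part = X - Full"
  have bigY: "card Y \<ge> t (Suc k)"
  proof (cases "real (card Full) \<ge> real (t k) / 2")
    case True
    have finF: "finite Full" unfolding Full_def using finX by simp
    have "card Full * K = (\<Sum>a\<in>Full. card {y\<in>Y. p y = a})" unfolding Full_def by simp
    also have "\<dots> = card (\<Union>a\<in>Full. {y\<in>Y. p y = a})"
      by (rule card_UN_disjoint[symmetric]) (use finF Yp(1) in auto)
    also have "\<dots> \<le> card Y" using Yp(1) by (intro card_mono) auto
    finally have c: "real (card Full) * real K \<le> real (card Y)" by (metis of_nat_le_iff of_nat_mult)
    have "real (t (Suc k)) = (real (t k) / 2) * (2 * real (t (Suc k)) / real (t k))" using tk by simp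
    also have "\<dots> \<le> real (card Full) * real K" using True Kge tk by (intro mult_mono) auto
    finally show ?thesis using c by linarith
  next
    case False
    have PX: "Part \<subseteq> X" unfolding Part_def by auto
    have cP: "card Part = card X - card Full" unfolding Part_def
      by (rule card_Diff_subset) (use finX in \<open>auto simp: Full_def\<close>)
    have "card Full \<le> card X" unfolding Full_def using finX by (intro card_mono) auto
    then have pgt: "real (card Part) > real (t k) / 2" using cP T0(3) False by linarith
    then have Pne: "Part \<noteq> {}" using tk by auto
    obtain a0 where a0: "a0 \<in> Part" using Pne by auto
    have PA: "Part \<subseteq> A'" using PX XA unfolding X_def by auto
    have PV: "Part \<subseteq> V" using PX XV by auto
    define p' where "p' = real (card Part)"
    define y where "y = real (card (NS V E Part))"
    have finPart: "finite Part" using PX finX finite_subset by blast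
    have sumdeg: "p' * D \<le> real (\<Sum>x\<in>Part. degree V E x)"
    proof -
      have "p' * D = (\<Sum>x\<in>Part. D)" unfolding p'_def by simp
      also have "\<dots> \<le> (\<Sum>x\<in>Part. real (degree V E x))" using deg PV by (intro sum_mono) auto
      finally show ?thesis by simp
    qed
    have z1: "(\<Sum>x\<in>Part. degree V E x) \<le> zar (card Part) (card (NS V E Part)) F"
      and z2: "(\<Sum>x\<in>Part. degree V E x) \<le> zar (card (NS V E Part)) (card Part) F"
      using cross_edges[OF fin AB(1,2,3) ff PA] by auto
    have finNS: "finite (NS V E Part)" unfolding NS_def using fin by simp
    have ypos: "y > 0"
    proof -
      have "real (degree V E a0) \<ge> D" using deg a0 PV by auto
      then have "card (Nb V E a0) > 0" using Dpos degree_Nb[of V E a0] by simp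
      then have "Nb V E a0 \<noteq> {}" by auto
      moreover have "Nb V E a0 \<subseteq> NS V E Part" unfolding NS_Un using a0 by auto
      ultimately have "NS V E Part \<noteq> {}" by auto
      then show ?thesis unfolding y_def using finNS by (simp add: card_gt_0_iff)
    qed
    have pm: "p' \<le> m"
    proof -
      have "card Part \<le> card V" using PV fin by (intro card_mono) auto
      then show ?thesis unfolding p'_def m using cV by linarith
    qed
    have p1: "1 \<le> p'"
    proof -
      have "real (t k) \<ge> 1" using tk by simp
      then have "real (card Part) > 0" using pgt by linarith
      then have "card Part \<ge> 1" by simp
      then show ?thesis unfolding p'_def by simp
    qed
    have h1: "p' \<le> y \<Longrightarrow> p'*D \<le> \<rho>*p'*y powr (\<alpha>-1) + C*y powr \<beta>"
    proof -
      assume "p' \<le> y"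
      then have "card Part \<le> card (NS V E Part)" unfolding p'_def y_def by simp
      moreover have "0 < card Part" using p1 unfolding p'_def by simp
      ultimately have "real (zar (card Part) (card (NS V E Part)) F) \<le> \<rho>*p'*y powr (\<alpha>-1) + C*y powr \<beta>"
        using Hz unfolding p'_def y_def by blast
      then show "p'*D \<le> \<rho>*p'*y powr (\<alpha>-1) + C*y powr \<beta>" using sumdeg z1 by (meson of_nat_le_iff order_trans)
    qed
    have h2: "y < p' \<Longrightarrow> p'*D \<le> \<rho>*y*p' powr (\<alpha>-1) + C*p' powr \<beta>"
    proof -
      assume "y < p'"
      then have "card (NS V E Part) \<le> card Part" unfolding p'_def y_def by simp
      moreover have "0 < card (NS V E Part)" using ypos unfolding y_def by simp
      ultimately have "real (zar (card (NS V E Part)) (card Part) F) \<le> \<rho>*y*p' powr (\<alpha>-1) + C*p' powr \<beta>"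
        using Hz unfolding p'_def y_def by blast
      then show "p'*D \<le> \<rho>*y*p' powr (\<alpha>-1) + C*p' powr \<beta>" using sumdeg z2 by (meson of_nat_le_iff order_trans)
    qed
    have ex: "min ((\<delta>/(2*\<rho>)) powr (1/(\<alpha>-1)) * m) ((p'*D/(2*C)) powr (1/\<beta>)) \<le> y"
      by (rule exp_num[OF p1 pm ypos par(1) par(6) par(2) par(3) par(4) par(5) D small h1 h2])
    have mono: "(real (t k) * D / (4*C)) powr (1/\<beta>) \<le> (p'*D/(2*C)) powr (1/\<beta>)"
    proof -
      have "real (t k) * D / (4*C) \<le> p'*D/(2*C)"
        using pgt Dpos par(6) unfolding p'_def by (simp add: field_simps)
      then show ?thesis using par Dpos tk by (intro powr_mono2) auto
    qed
    have Mle: "min (c1 * m) ((real (t k) * D / (4*C)) powr (1/\<beta>)) \<le> y"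
      using ex mono unfolding c1 by (smt (verit) mult.commute)
    have sub: "NS V E Part \<subseteq> Y \<union> W"
    proof
      fix z assume "z \<in> NS V E Part"
      then obtain a where a: "a \<in> Part" "z \<in> Nb V E a" unfolding NS_Un by blast
      have "a \<notin> Full" "a \<in> X" using a(1) unfolding Part_def by auto
      then have "Nb V E a \<subseteq> Y \<union> W" using Yp(5) unfolding Full_def by auto
      then show "z \<in> Y \<union> W" using a(2) by auto
    qed
    have "card (NS V E Part) \<le> card (Y \<union> W)" using sub Yp(1) T0(1) by (intro card_mono) auto
    also have "\<dots> \<le> card Y + card W" by (rule card_Un_le)
    finally have "y \<le> real (card Y) + 1 + 2 * real (t k)" unfolding y_def using T0(4) by linarith
    then show ?thesis using Mle room by linarith
  qed
  obtain Y' where Y': "Y' \<subseteq> Y" "card Y' = t (Suc k)" "finite Y'"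
    using obtain_subset_with_card_n[OF bigY] by blast
  have pY: "\<forall>y\<in>Y'. p y \<in> W \<and> dep (p y) = k \<and> {p y, y} \<in> E"
    using Yp(3) Y'(1) unfolding X_def Nb_def by auto
  have cap: "\<forall>z\<in>W. dep z = k \<longrightarrow> card {y\<in>Y'. p y = z} \<le> K"
  proof (intro ballI impI)
    fix z assume "z \<in> W" "dep z = k"
    then have "z \<in> X" unfolding X_def by simp
    then have "card {y\<in>Y. p y = z} \<le> K" using Yp(4) by auto
    moreover have "card {y\<in>Y'. p y = z} \<le> card {y\<in>Y. p y = z}" using Y'(1) Yp(1) by (intro card_mono) auto
    ultimately show "card {y\<in>Y'. p y = z} \<le> K" by simp
  qed
  have Kle: "real K \<le> 3 * real (t (Suc k)) / real (t k)"
  proof -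
    have r2: "2 * real (t (Suc k)) / real (t k) \<ge> 1"
      using grow tk by (simp add: field_simps)
    have "real K \<le> 2 * real (t (Suc k)) / real (t k) + 1" unfolding K_def
      using r2 by (simp add: of_nat_nat)
    also have "\<dots> \<le> 3 * real (t (Suc k)) / real (t k)" using grow tk by (simp add: field_simps)
    finally show ?thesis .
  qed
  have newT: "tree_ok V E u (Suc k) t (W \<union> Y') (\<lambda>x. if x \<in> Y' then Suc k else dep x) (\<lambda>x. if x \<in> Y' then p x else par x)"
    by (rule tree_step[OF T k Y'(3) _ _ Y'(2) pY cap Kle grow tk]) (use YV Y'(1) Yp(2) in auto)
  have lev: "{v\<in>W \<union> Y'. (if v \<in> Y' then Suc k else dep v) = Suc k} \<subseteq> B'"
  proof
    fix v assume v: "v \<in> {v\<in>W \<union> Y'. (if v \<in> Y' then Suc k else dep v) = Suc k}"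
    have "v \<in> Y'"
    proof (rule ccontr)
      assume "v \<notin> Y'"
      then have "v \<in> W" "dep v = Suc k" using v by auto
      then show False using T unfolding tree_ok_def by fastforce
    qed
    then have "p v \<in> X" "v \<in> Nb V E (p v)" using Yp(3) Y'(1) by auto
    then show "v \<in> B'" using Nb_side[OF AB(1) AB(3)] XA unfolding X_def by blast
  qed
  show ?thesis using newT lev by blast
qed


lemma tpath_set:
  assumes T: "tree_ok V E u k t W dep par" and v: "v \<in> W"
  shows "set (tpath par dep v) \<subseteq> W"
  unfolding tpath_def using tree_iter[OF T v] v by auto

lemma core:
  fixes V :: "'a set" and E :: "'a set set" and u :: 'a and F and n :: nat
    and \<alpha> \<beta> \<rho> \<delta> C c1 :: real
  assumes pa: "\<alpha> < 2" "\<beta> < \<alpha>" "1 \<le> \<beta>" "\<rho> > 0" "\<delta> > 0" "C > 0"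
    and c1: "c1 = (\<delta>/(2*\<rho>)) powr (1/(\<alpha>-1))"
    and Hz: "\<forall>m n. 0 < m \<longrightarrow> m \<le> n \<longrightarrow> real (zar m n F) \<le> \<rho> * real m * real n powr (\<alpha> - 1) + C * real n powr \<beta>"
    and G: "finite V" "card V \<le> n" "bipartite V E" "F_free F V E"
      "\<forall>x\<in>V. real (degree V E x) \<ge> \<delta> * real n powr (\<alpha> - 1)" "u \<in> V"
    and n2: "real n \<ge> 2"
    and N1: "32 * 8 powr \<beta> * C * real n powr (\<beta>-1) \<le> \<delta> * real n powr (\<alpha>-1)"
    and N3: "real (ell0 \<alpha> \<beta> + 1) * 3^(ell0 \<alpha> \<beta>) * ln (real n) \<le> \<delta> * real n powr (\<alpha>-1)"
    and N4: "c1 * real n / 8 \<le> ac \<delta> C \<beta> (ell0 \<alpha> \<beta> - 1) * real n powr ex \<alpha> \<beta> (ell0 \<alpha> \<beta> - 1)"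
  shows "\<exists>S P. S \<subseteq> V \<and> real (card S) \<ge> c1/8 * real n \<and>
          (\<forall>v\<in>S. is_path V E u v (P v) \<and> length (P v) - 1 \<le> ell0 \<alpha> \<beta>) \<and>
          (\<forall>w\<in>V. w \<noteq> u \<longrightarrow> real (card {v\<in>S. w \<in> set (P v)}) \<le> real n / ln (real n))"
proof -
  define L where "L = ell0 \<alpha> \<beta>"
  define m where "m = real n"
  define D where "D = \<delta> * m powr (\<alpha> - 1)"
  define cn where "cn = c1 * m"
  define t where "t = tt D cn C \<beta>"
  have a1: "1 < \<alpha>" using pa by linarith
  have L2: "L \<ge> 2" unfolding L_def using ell0_ge2 pa by blast
  have m1: "m \<ge> 1" "m > 0" using n2 unfolding m_def by auto
  have Dpos: "D > 0" unfolding D_def using pa m1 by simp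
  have c1pos: "c1 > 0" unfolding c1 using pa by simp
  have cnpos: "cn > 0" unfolding cn_def using c1pos m1 by simp
  have tpos: "\<And>k. t k \<ge> 1" unfolding t_def using tt_pos[OF Dpos cnpos pa(6)] by blast
  obtain A B where AB: "A \<inter> B = {}" "A \<union> B = V" "\<forall>e\<in>E. \<exists>a\<in>A. \<exists>b\<in>B. e = {a, b}"
    using G(3) unfolding bipartite_def by blast
  have AB2: "\<forall>e\<in>E. \<exists>a\<in>B. \<exists>b\<in>A. e = {a, b}" using AB(3) by (metis insert_commute)
  have BA: "B \<inter> A = {}" "B \<union> A = V" using AB by auto
  have N1': "32 * 8 powr \<beta> * C * m powr (\<beta>-1) \<le> D" using N1 unfolding m_def D_def .
  have small: "2*C*m powr (\<beta>-1) < D"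
  proof -
    have x: "C * m powr (\<beta>-1) > 0" using pa m1 by simp
    have "8 powr \<beta> \<ge> 1" using pa by (intro ge_one_powr_ge_zero) auto
    then have "2 < 32 * 8 powr \<beta>" by linarith
    then have "2 * (C * m powr (\<beta>-1)) < 32 * 8 powr \<beta> * (C * m powr (\<beta>-1))" using x
      by (rule mult_strict_right_mono)
    moreover have "2*C*m powr (\<beta>-1) = 2 * (C * m powr (\<beta>-1))" by simp
    moreover have "32 * 8 powr \<beta> * C * m powr (\<beta>-1) = 32 * 8 powr \<beta> * (C * m powr (\<beta>-1))" by simp
    ultimately show ?thesis using N1' by linarith
  qed
  have degD: "\<forall>x\<in>V. real (degree V E x) \<ge> D" using G(5) unfolding D_def m_def .
  have exj: "\<exists>j. 1 \<le> j \<and> cn/8 \<le> real (t j) \<and> j \<le> L"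
  proof -
    have g: "(\<exists>j\<in>{1..Suc (L-1)}. cn/8 \<le> real (t j)) \<or> ac \<delta> C \<beta> (L-1) * m powr (ex \<alpha> \<beta> (L-1)) \<le> real (t (Suc (L-1)))"
      unfolding t_def by (rule tt_growth[OF D_def pa(5) pa(6) pa(3) m1(2) cnpos])
    have SL: "Suc (L-1) = L" using L2 by simp
    show ?thesis
    proof (cases "\<exists>j\<in>{1..Suc (L-1)}. cn/8 \<le> real (t j)")
      case True then show ?thesis using SL by auto
    next
      case False
      then have "ac \<delta> C \<beta> (L-1) * m powr (ex \<alpha> \<beta> (L-1)) \<le> real (t L)" using g SL by simp
      moreover have "cn/8 \<le> ac \<delta> C \<beta> (L-1) * m powr (ex \<alpha> \<beta> (L-1))"
        using N4 unfolding cn_def m_def L_def by simp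
      ultimately have "cn/8 \<le> real (t L)" by linarith
      then show ?thesis using L2 by (intro exI[of _ L]) auto
    qed
  qed
  define Ls where "Ls = (LEAST j. 1 \<le> j \<and> cn/8 \<le> real (t j))"
  have Ls: "1 \<le> Ls" "cn/8 \<le> real (t Ls)" "Ls \<le> L"
  proof -
    obtain j where j: "1 \<le> j \<and> cn/8 \<le> real (t j)" "j \<le> L" using exj by blast
    have "1 \<le> Ls \<and> cn/8 \<le> real (t Ls)" unfolding Ls_def by (rule LeastI[of _ j]) (use j in simp)
    moreover have "Ls \<le> j" unfolding Ls_def by (rule Least_le) (use j in simp)
    ultimately show "1 \<le> Ls" "cn/8 \<le> real (t Ls)" "Ls \<le> L" using j by auto
  qed
  have below: "\<And>k. 1 \<le> k \<Longrightarrow> k < Ls \<Longrightarrow> real (t k) < cn/8"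
  proof -
    fix k assume "1 \<le> k" "k < Ls"
    have "\<not> (1 \<le> k \<and> cn/8 \<le> real (t k))" using \<open>k < Ls\<close> unfolding Ls_def by (rule not_less_Least)
    then show "real (t k) < cn/8" using \<open>1 \<le> k\<close> by simp
  qed
  have levV: "\<And>k W dep par j. tree_ok V E u k t W dep par \<Longrightarrow> 1 \<le> j \<Longrightarrow> j \<le> k \<Longrightarrow> t j \<le> n"
  proof -
    fix k W dep par j assume T: "tree_ok V E u k t W dep par" "1 \<le> j" "j \<le> k"
    then have "t j = card {v\<in>W. dep v = j}" "W \<subseteq> V" unfolding tree_ok_def by auto
    moreover have "card {v\<in>W. dep v = j} \<le> card V" using calculation(2) G(1) by (intro card_mono) auto
    ultimately show "t j \<le> n" using G(2) by simp
  qed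
  have stepnum: "\<And>k. 1 \<le> k \<Longrightarrow> k < Ls \<Longrightarrow> t k \<le> n \<Longrightarrow> 2 * t k \<le> t (Suc k) \<and>
      real (t (Suc k)) + 1 + 2 * real (t k) \<le> min (c1 * m) ((real (t k) * D / (4*C)) powr (1/\<beta>))"
  proof -
    fix k assume k: "1 \<le> k" "k < Ls" "t k \<le> n"
    have sm: "real (tt D cn C \<beta> k) \<le> m" using k(3) unfolding t_def m_def by simp
    have sc: "real (tt D cn C \<beta> k) < cn/8" using below[OF k(1,2)] unfolding t_def .
    show "2 * t k \<le> t (Suc k) \<and>
      real (t (Suc k)) + 1 + 2 * real (t k) \<le> min (c1 * m) ((real (t k) * D / (4*C)) powr (1/\<beta>))"
      using tt_step[OF Dpos pa(6) pa(3) k(1) m1(1) sm sc N1'] unfolding t_def cn_def by simp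
  qed
  have TR: "\<And>k. 1 \<le> k \<Longrightarrow> k \<le> Ls \<Longrightarrow> (\<exists>W dep par. tree_ok V E u k t W dep par \<and>
        ({v\<in>W. dep v = k} \<subseteq> A \<or> {v\<in>W. dep v = k} \<subseteq> B))"
  proof -
    fix k :: nat
    show "1 \<le> k \<Longrightarrow> k \<le> Ls \<Longrightarrow> (\<exists>W dep par. tree_ok V E u k t W dep par \<and>
        ({v\<in>W. dep v = k} \<subseteq> A \<or> {v\<in>W. dep v = k} \<subseteq> B))"
    proof (induction k)
      case 0 then show ?case by simp
    next
      case (Suc k)
      show ?case
      proof (cases "k = 0")
        case True
        have "real (degree V E u) \<ge> D" using degD G(6) by auto
        then have "\<lceil>D\<rceil> \<le> int (degree V E u)" by (simp add: ceiling_le_iff)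
        then have "nat \<lceil>D\<rceil> \<le> degree V E u" by (simp add: nat_le_iff)
        then have t1: "t 1 \<le> card (Nb V E u)" unfolding t_def degree_Nb by simp
        obtain X1 where X1: "X1 \<subseteq> Nb V E u" "card X1 = t 1" using obtain_subset_with_card_n[OF t1] by blast
        have uN: "u \<notin> Nb V E u"
        proof
          assume "u \<in> Nb V E u"
          then have "{u, u} \<in> E" unfolding Nb_def by simp
          then obtain a b where "a \<in> A" "b \<in> B" "{u,u} = {a,b}" using AB(3) by blast
          then show False using AB(1) by (auto simp: doubleton_eq_iff)
        qed
        have base: "tree_ok V E u 1 t (insert u X1) (\<lambda>x. if x \<in> X1 then 1 else 0) (\<lambda>x. u)"
          by (rule tree_base[where t=t, OF G(6) X1 G(1)]) (use uN X1 tpos in auto)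
        have lev: "{v \<in> insert u X1. (if v \<in> X1 then 1 else 0) = (1::nat)} = X1" by auto
        have "X1 \<subseteq> A \<or> X1 \<subseteq> B"
        proof (cases "u \<in> A")
          case True then show ?thesis using Nb_side[OF AB(1) AB(3) True] X1(1) by blast
        next
          case False
          then have "u \<in> B" using AB(2) G(6) by auto
          then show ?thesis using Nb_side[OF BA(1) AB2] X1(1) by blast
        qed
        then show ?thesis using base lev True by auto
      next
        case False
        then have k1: "1 \<le> k" by simp
        have kL: "k < Ls" using Suc.prems by simp
        obtain W dep par where T: "tree_ok V E u k t W dep par"
          and side: "{v\<in>W. dep v = k} \<subseteq> A \<or> {v\<in>W. dep v = k} \<subseteq> B"
          using Suc.IH k1 kL by auto
        have tkn: "t k \<le> n" using levV[OF T k1] by simp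
        have nums: "2 * t k \<le> t (Suc k)"
            "real (t (Suc k)) + 1 + 2 * real (t k) \<le> min (c1 * m) ((real (t k) * D / (4*C)) powr (1/\<beta>))"
          using stepnum[OF k1 kL tkn] by auto
        have ex1: "\<And>A' B'. A' \<inter> B' = {} \<Longrightarrow> A' \<union> B' = V \<Longrightarrow> \<forall>e\<in>E. \<exists>a\<in>A'. \<exists>b\<in>B'. e = {a, b} \<Longrightarrow>
              {v\<in>W. dep v = k} \<subseteq> A' \<Longrightarrow>
              \<exists>W' dep' par'. tree_ok V E u (Suc k) t W' dep' par' \<and> {v\<in>W'. dep' v = Suc k} \<subseteq> B'"
        proof -
          fix A' B' assume ab: "A' \<inter> B' = {}" "A' \<union> B' = V" "\<forall>e\<in>E. \<exists>a\<in>A'. \<exists>b\<in>B'. e = {a, b}"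
            "{v\<in>W. dep v = k} \<subseteq> A'"
          show "\<exists>W' dep' par'. tree_ok V E u (Suc k) t W' dep' par' \<and> {v\<in>W'. dep' v = Suc k} \<subseteq> B'"
            by (rule extend[OF G(1,2,4) Hz degD D_def m_def m1(1) small pa(4) a1 pa(1) pa(3) pa(5) pa(6) c1
                  ab(1,2,3) T ab(4) k1 tpos[of k] nums])
        qed
        show ?thesis
        proof (cases "{v\<in>W. dep v = k} \<subseteq> A")
          case True
          then show ?thesis using ex1[OF AB(1,2,3) True] by blast
        next
          case False
          then have "{v\<in>W. dep v = k} \<subseteq> B" using side by blast
          then show ?thesis using ex1[OF BA AB2] by blast
        qed
      qed
    qed
  qed
  obtain W dep par where T: "tree_ok V E u Ls t W dep par" using TR[OF Ls(1) order_refl] by blast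
  have T0: "finite W" "W \<subseteq> V" "\<forall>v\<in>W. dep v = 0 \<longrightarrow> v = u" "\<forall>v\<in>W. dep v \<le> Ls"
    "card {v\<in>W. dep v = Ls} = t Ls"
    "\<forall>w\<in>W. w \<noteq> u \<longrightarrow> (\<forall>i. dep w \<le> i \<longrightarrow>
        real (card (desc W dep par w i)) \<le> 3^(i - dep w) * real (t i) / real (t (dep w)))"
    using T Ls(1) unfolding tree_ok_def by auto
  have tn: "\<And>j. 1 \<le> j \<Longrightarrow> j \<le> Ls \<Longrightarrow> real (t j) \<le> m" using levV[OF T] unfolding m_def by simp
  have tmono: "\<And>j. 1 \<le> j \<Longrightarrow> j \<le> Ls \<Longrightarrow> t 1 \<le> t j"
  proof -
    fix j :: nat
    show "1 \<le> j \<Longrightarrow> j \<le> Ls \<Longrightarrow> t 1 \<le> t j"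
    proof (induction j)
      case 0 then show ?case by simp
    next
      case (Suc j)
      show ?case
      proof (cases "j = 0")
        case True then show ?thesis by simp
      next
        case False
        then have j1: "1 \<le> j" by simp
        have jL: "j < Ls" using Suc.prems by simp
        have "t j \<le> n" using tn[OF j1] jL unfolding m_def by fastforce
        then have "2 * t j \<le> t (Suc j)" using stepnum[OF j1 jL] by blast
        then show ?thesis using Suc.IH j1 jL by simp
      qed
    qed
  qed
  have t1D: "real (t 1) \<ge> D" unfolding t_def by simp linarith
  have lnpos: "ln m > 0" using n2 unfolding m_def by simp
  define P where "P = tpath par dep"
  show ?thesis
  proof (intro exI[of _ W] exI[of _ P] conjI)
    show "W \<subseteq> V" by (rule T0(2))
    show "real (card W) \<ge> c1/8 * real n"
    proof -
      have "card {v\<in>W. dep v = Ls} \<le> card W" using T0(1) by (intro card_mono) auto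
      then have "real (t Ls) \<le> real (card W)" using T0(5) by simp
      then show ?thesis using Ls(2) unfolding cn_def m_def by simp
    qed
    show "\<forall>v\<in>W. is_path V E u v (P v) \<and> length (P v) - 1 \<le> ell0 \<alpha> \<beta>"
      using tree_path[OF T] Ls(3) unfolding P_def L_def by fastforce
    show "\<forall>w\<in>V. w \<noteq> u \<longrightarrow> real (card {v\<in>W. w \<in> set (P v)}) \<le> real n / ln (real n)"
    proof (intro ballI impI)
      fix w assume w: "w \<in> V" "w \<noteq> u"
      have rhs0: "real n / ln (real n) \<ge> 0" using lnpos unfolding m_def by simp
      show "real (card {v\<in>W. w \<in> set (P v)}) \<le> real n / ln (real n)"
      proof (cases "w \<in> W")
        case False
        have e: "{v\<in>W. w \<in> set (P v)} = {}" using tpath_set[OF T] False unfolding P_def by blast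
        show ?thesis unfolding e using rhs0 by simp
      next
        case True
        define j where "j = dep w"
        have j1: "1 \<le> j" using T0(3) True w(2) unfolding j_def by (cases "dep w") auto
        have jL: "j \<le> Ls" using T0(4) True unfolding j_def by simp
        have tjD: "real (t j) \<ge> D" using tmono[OF j1 jL] t1D by linarith
        have trm: "\<And>i. i \<in> {j..Ls} \<Longrightarrow> real (card (desc W dep par w i)) \<le> 3^L * m / D"
        proof -
          fix i assume i: "i \<in> {j..Ls}"
          have "real (card (desc W dep par w i)) \<le> 3^(i - j) * real (t i) / real (t j)"
            using T0(6) True w(2) i unfolding j_def by auto
          also have "\<dots> \<le> 3^L * m / D"
          proof -
            have "(3::real)^(i - j) \<le> 3^L" using i Ls(3) by (intro power_increasing) auto
            moreover have "real (t i) \<le> m" using tn i j1 by auto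
            ultimately have "3^(i - j) * real (t i) \<le> 3^L * m" by (intro mult_mono) auto
            moreover have "real (t j) > 0" using tpos[of j] by simp
            ultimately have "3^(i - j) * real (t i) / real (t j) \<le> 3^L * m / real (t j)"
              by (intro divide_right_mono) auto
            also have "\<dots> \<le> 3^L * m / D" using tjD Dpos m1 by (intro divide_left_mono) auto
            finally show ?thesis .
          qed
          finally show "real (card (desc W dep par w i)) \<le> 3^L * m / D" .
        qed
        have "card {v\<in>W. w \<in> set (P v)} \<le> card (\<Union>i\<in>{j..Ls}. desc W dep par w i)"
          using tree_load[OF T True] unfolding P_def j_def
          by (intro card_mono) (auto simp: desc_def T0(1))
        also have "\<dots> \<le> (\<Sum>i\<in>{j..Ls}. card (desc W dep par w i))" by (rule card_UN_le) simp
        finally have "real (card {v\<in>W. w \<in> set (P v)}) \<le> (\<Sum>i\<in>{j..Ls}. real (card (desc W dep par w i)))"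
          by (metis of_nat_le_iff of_nat_sum)
        also have "\<dots> \<le> (\<Sum>i\<in>{j..Ls}. 3^L * m / D)" using trm by (rule sum_mono)
        also have "\<dots> = real (card {j..Ls}) * (3^L * m / D)" by simp
        also have "\<dots> \<le> real (L + 1) * (3^L * m / D)"
        proof -
          have "card {j..Ls} \<le> L + 1" using Ls(3) by simp
          then show ?thesis using Dpos m1 by (intro mult_right_mono) auto
        qed
        also have "\<dots> \<le> m / ln m"
        proof -
          have N3': "real (L + 1) * 3^L \<le> D / ln m"
            using N3 lnpos unfolding L_def D_def m_def by (simp add: field_simps)
          have "real (L + 1) * (3^L * m / D) = m * (real (L + 1) * 3^L) / D" by simp
          also have "\<dots> \<le> m * (D / ln m) / D"
            using N3' m1 Dpos by (intro divide_right_mono mult_left_mono) auto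
          also have "\<dots> = m / ln m" using Dpos by simp
          finally show ?thesis .
        qed
        finally show ?thesis unfolding m_def .
      qed
    qed
  qed
qed


lemma ev_powr:
  fixes b K :: real
  assumes "b > 0"
  shows "\<exists>M\<ge>1. \<forall>x\<ge>M. K \<le> x powr b"
proof (cases "K > 0")
  case True
  show ?thesis
  proof (intro exI[of _ "max 1 (K powr (1/b))"] conjI allI impI)
    fix x :: real assume "max 1 (K powr (1/b)) \<le> x"
    then show "K \<le> x powr b" using big_powr[OF assms _ _ True] by simp
  qed simp
next
  case False
  then show ?thesis by (intro exI[of _ 1]) (auto intro: order_trans[OF _ powr_ge_zero])
qed

theorem mainTheorem5:
  fixes \<alpha> \<beta> \<rho> \<delta> :: real
  assumes "\<alpha> < 2" and "\<beta> < \<alpha>" and "1 \<le> \<beta>" and "\<rho> > 0" and "\<delta> > 0"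
  shows "\<exists>\<mu>'>0. \<forall>(F :: (nat set \<times> nat set set) set) (C :: real).
    (\<forall>H\<in>F. finite (fst H) \<and> bipartite (fst H) (snd H)) \<longrightarrow>
    (\<forall>m n. 0 < m \<longrightarrow> m \<le> n \<longrightarrow>
        real (zar m n F) \<le> \<rho> * real m * real n powr (\<alpha> - 1) + C * real n powr \<beta>) \<longrightarrow>
    (\<exists>N. \<forall>n\<ge>N. \<forall>(V :: 'a set) E u.
       finite V \<and> card V \<le> n \<and> bipartite V E \<and> F_free F V E \<and>
       (\<forall>x\<in>V. real (degree V E x) \<ge> \<delta> * real n powr (\<alpha> - 1)) \<and> u \<in> V \<longrightarrow>
       (\<exists>S P. S \<subseteq> V \<and> real (card S) \<ge> \<mu>' * real n \<and>
          (\<forall>v\<in>S. is_path V E u v (P v) \<and> length (P v) - 1 \<le> ell0 \<alpha> \<beta>) \<and>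
          (\<forall>w\<in>V. w \<noteq> u \<longrightarrow> real (card {v\<in>S. w \<in> set (P v)}) \<le> real n / ln (real n))))"
proof -
  have a1: "1 < \<alpha>" using assms by linarith
  define L where "L = ell0 \<alpha> \<beta>"
  define c1 where "c1 = (\<delta>/(2*\<rho>)) powr (1/(\<alpha>-1))"
  have c1pos: "c1 > 0" unfolding c1_def using assms by simp
  have exL: "ex \<alpha> \<beta> (L - 1) > 1" unfolding L_def using ex_ell0 assms by blast
  show ?thesis
  proof (intro exI[of _ "c1/8"] conjI allI impI)
    show "c1/8 > 0" using c1pos by simp
    fix F :: "(nat set \<times> nat set set) set" and C :: real
    assume Hz: "\<forall>m n. 0 < m \<longrightarrow> m \<le> n \<longrightarrow>
        real (zar m n F) \<le> \<rho> * real m * real n powr (\<alpha> - 1) + C * real n powr \<beta>"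
    define C' where "C' = max C 1"
    have C'pos: "C' > 0" unfolding C'_def by simp
    have Hz': "\<forall>m n. 0 < m \<longrightarrow> m \<le> n \<longrightarrow>
        real (zar m n F) \<le> \<rho> * real m * real n powr (\<alpha> - 1) + C' * real n powr \<beta>"
    proof (intro allI impI)
      fix m n :: nat assume "0 < m" "m \<le> n"
      then have "real (zar m n F) \<le> \<rho> * real m * real n powr (\<alpha> - 1) + C * real n powr \<beta>" using Hz by blast
      moreover have "C * real n powr \<beta> \<le> C' * real n powr \<beta>" unfolding C'_def
        by (intro mult_right_mono) auto
      ultimately show "real (zar m n F) \<le> \<rho> * real m * real n powr (\<alpha> - 1) + C' * real n powr \<beta>" by linarith
    qed
    have acpos: "ac \<delta> C' \<beta> (L-1) > 0" using ac_pos assms C'pos by blast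
    obtain M1 where M1: "M1 \<ge> 1" "\<forall>x\<ge>M1. 32 * 8 powr \<beta> * C' / \<delta> \<le> x powr (\<alpha>-\<beta>)"
      using ev_powr[of "\<alpha>-\<beta>"] assms by auto
    obtain M3 where M3: "M3 \<ge> 1" "\<forall>x\<ge>M3. real (L+1) * 3^L * (2/(\<alpha>-1)) / \<delta> \<le> x powr ((\<alpha>-1)/2)"
      using ev_powr[of "(\<alpha>-1)/2"] a1 by auto
    obtain M4 where M4: "M4 \<ge> 1" "\<forall>x\<ge>M4. c1 / (8 * ac \<delta> C' \<beta> (L-1)) \<le> x powr (ex \<alpha> \<beta> (L-1) - 1)"
      using ev_powr[of "ex \<alpha> \<beta> (L-1) - 1"] exL by auto
    define N where "N = nat \<lceil>max (max M1 M3) (max M4 2)\<rceil>"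
    show "\<exists>N. \<forall>n\<ge>N. \<forall>(V :: 'a set) E u.
       finite V \<and> card V \<le> n \<and> bipartite V E \<and> F_free F V E \<and>
       (\<forall>x\<in>V. real (degree V E x) \<ge> \<delta> * real n powr (\<alpha> - 1)) \<and> u \<in> V \<longrightarrow>
       (\<exists>S P. S \<subseteq> V \<and> real (card S) \<ge> c1/8 * real n \<and>
          (\<forall>v\<in>S. is_path V E u v (P v) \<and> length (P v) - 1 \<le> ell0 \<alpha> \<beta>) \<and>
          (\<forall>w\<in>V. w \<noteq> u \<longrightarrow> real (card {v\<in>S. w \<in> set (P v)}) \<le> real n / ln (real n)))"
    proof (intro exI[of _ N] allI impI)
      fix n :: nat and V :: "'a set" and E u
      assume nN: "N \<le> n" and H: "finite V \<and> card V \<le> n \<and> bipartite V E \<and> F_free F V E \<and>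
       (\<forall>x\<in>V. real (degree V E x) \<ge> \<delta> * real n powr (\<alpha> - 1)) \<and> u \<in> V"
      define x where "x = real n"
      have xge: "x \<ge> max (max M1 M3) (max M4 2)" using nN unfolding N_def x_def by linarith
      then have x: "x \<ge> M1" "x \<ge> M3" "x \<ge> M4" "x \<ge> 2" by auto
      have xpos: "x > 0" using x by simp
      have N1: "32 * 8 powr \<beta> * C' * x powr (\<beta>-1) \<le> \<delta> * x powr (\<alpha>-1)"
      proof -
        have "32 * 8 powr \<beta> * C' / \<delta> \<le> x powr (\<alpha>-\<beta>)" using M1 x by blast
        then have "32 * 8 powr \<beta> * C' \<le> \<delta> * x powr (\<alpha>-\<beta>)" using assms by (simp add: field_simps)
        then have "32 * 8 powr \<beta> * C' * x powr (\<beta>-1) \<le> \<delta> * x powr (\<alpha>-\<beta>) * x powr (\<beta>-1)"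
          by (intro mult_right_mono) auto
        also have "\<dots> = \<delta> * x powr (\<alpha>-1)" using xpos by (simp add: mult.assoc powr_add[symmetric])
        finally show ?thesis .
      qed
      have N3: "real (L + 1) * 3^L * ln x \<le> \<delta> * x powr (\<alpha>-1)"
      proof -
        define h where "h = x powr ((\<alpha>-1)/2)"
        have hh: "x powr (\<alpha>-1) = h * h" unfolding h_def using xpos by (simp add: powr_add[symmetric])
        have lnb: "ln x \<le> h / ((\<alpha>-1)/2)" unfolding h_def using x a1 by (intro ln_powr_bound) auto
        have Kh: "real (L+1) * 3^L * (2/(\<alpha>-1)) / \<delta> \<le> h" unfolding h_def using M3 x by blast
        have "real (L + 1) * 3^L * ln x \<le> real (L + 1) * 3^L * (h / ((\<alpha>-1)/2))"
          using lnb by (intro mult_left_mono) auto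
        also have "\<dots> = (real (L+1) * 3^L * (2/(\<alpha>-1)) / \<delta>) * (\<delta> * h)" using assms by simp
        also have "\<dots> \<le> h * (\<delta> * h)" using Kh assms xpos unfolding h_def by (intro mult_right_mono) auto
        also have "\<dots> = \<delta> * x powr (\<alpha>-1)" using hh by simp
        finally show ?thesis .
      qed
      have N4: "c1 * x / 8 \<le> ac \<delta> C' \<beta> (L-1) * x powr ex \<alpha> \<beta> (L-1)"
      proof -
        have "c1 / (8 * ac \<delta> C' \<beta> (L-1)) \<le> x powr (ex \<alpha> \<beta> (L-1) - 1)" using M4 x by blast
        then have "c1 / 8 \<le> ac \<delta> C' \<beta> (L-1) * x powr (ex \<alpha> \<beta> (L-1) - 1)"
          using acpos by (simp add: field_simps)
        then have "c1 / 8 * x \<le> ac \<delta> C' \<beta> (L-1) * x powr (ex \<alpha> \<beta> (L-1) - 1) * x"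
          using xpos by (intro mult_right_mono) auto
        also have "\<dots> = ac \<delta> C' \<beta> (L-1) * x powr ex \<alpha> \<beta> (L-1)"
          using xpos by (simp add: mult.assoc powr_diff)
        finally show ?thesis by simp
      qed
      show "\<exists>S P. S \<subseteq> V \<and> real (card S) \<ge> c1/8 * real n \<and>
          (\<forall>v\<in>S. is_path V E u v (P v) \<and> length (P v) - 1 \<le> ell0 \<alpha> \<beta>) \<and>
          (\<forall>w\<in>V. w \<noteq> u \<longrightarrow> real (card {v\<in>S. w \<in> set (P v)}) \<le> real n / ln (real n))"
        by (rule core[OF assms C'pos c1_def Hz']) (use H x N1 N3 N4 in \<open>auto simp: x_def L_def\<close>)
    qed
  qed
qed


end
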